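(* Let $\mathbf{L}$ be a Euclidean modal logic such that $\mathtt{S}_{\mathbf{L}}\setminus\big((\{1\}\times\mathbf{N}^{-})\cup(\mathbf{N}^{+}\times\{-1,0,1\})\big)$ is finite. Let $\varphi$ be a modal formula with $\mathbf{L}=\mathbf{K5}\oplus\varphi$. Let $k$ be the least integer such that $k\ge4$ and for all $m\in\mathbf{N}^{+}$, $n\in\mathbf{N}^{-}$, if $(m,n)\in\mathtt{S}_{\mathbf{L}}\setminus\big((\{1\}\times\mathbf{N}^{-})\cup(\mathbf{N}^{+}\times\{-1,0,1\})\big)$ then $m+n\le k$. Then for every first-order sentence $A$, writing $q=\max\{\mathtt{qd}(A),3\}$, $Q=2q(q(q+1)^2+1)$ and $K=2^k$, the following are equivalent: (1) $A\in\mathtt{Th}(\mathtt{Fr}(\mathbf{L}))$; (2) for every finite Euclidean frame $(W,R)$ with $|W|\le 2\cdot q\cdot(QK+1)^2\cdot 2^{(QK)^2}\cdot Q\cdot K$ in which $\varphi$ is valid, $A$ is valid in $(W,R)$.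
   Context: A frame is a pair $(W,R)$ with $W$ non-empty and $R\subseteq W\times W$; Euclidean means $sRt$ and $sRu$ imply $tRu$ and $uRt$. Modal formulas (propositional variables, $\bot,\neg,\vee,\Box$) have standard Kripke semantics; validity in a frame means truth at all points under all valuations. A (normal) modal logic contains all tautologies and K axioms and is closed under uniform substitution, modus ponens and necessitation; a Euclidean modal logic is one not containing $\bot$ and containing $\Diamond\psi\to\Box\Diamond\psi$ for all $\psi$; $\mathbf{K5}$ is the least modal logic containing all $\Diamond\psi\to\Box\Diamond\psi$, and $\mathbf{K5}\oplus\varphi$ the least modal logic containing $\mathbf{K5}$ and $\varphi$. $\mathtt{Fr}(\mathbf{L})$ is the class of frames validating $\mathbf{L}$; $\mathtt{Th}(\mathcal{C})$ is the set of first-order sentences (one binary relation symbol $\mathbf{R}$ and equality) valid in all frames of $\mathcal{C}$; $\mathtt{qd}(A)$ is the quantifier depth. $\mathbf{N}^{+}=\{1,2,\dots\}$, $\mathbf{N}^{-}=\{-1,0,1,2,\dots\}$. For $m\in\mathbf{N}^{+}$, $n\ge0$, the flower $\mathcal{F}_m^n$ has universe $\{0,\dots,m+n\}$ and relation $(\{0\}\times\{1,\dots,m\})\cup\{1,\dots,m+n\}^2$; $\mathcal{F}_m^{-1}$ has universe $\{1,\dots,m\}$ and relation $\{1,\dots,m\}^2$. $\mathtt{S}_{\mathbf{L}}=\{(m,n)\in\mathbf{N}^{+}\times\mathbf{N}^{-}:\ \mathbf{L}\text{ valid in }\mathcal{F}_m^n\}$. *)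

theory Defs
  imports Main
begin

datatype fm = Var nat | Bot | Neg fm | Disj fm fm | Box fm

definition Imp :: "fm \<Rightarrow> fm \<Rightarrow> fm" where "Imp a b = Disj (Neg a) b"
definition Dia :: "fm \<Rightarrow> fm" where "Dia a = Neg (Box (Neg a))"

definition is_frame :: "'w set \<Rightarrow> ('w \<times> 'w) set \<Rightarrow> bool" where
  "is_frame W R \<longleftrightarrow> W \<noteq> {} \<and> R \<subseteq> W \<times> W"

definition euclidean :: "'w set \<Rightarrow> ('w \<times> 'w) set \<Rightarrow> bool" where
  "euclidean W R \<longleftrightarrow> (\<forall>s t u. (s,t) \<in> R \<longrightarrow> (s,u) \<in> R \<longrightarrow> (t,u) \<in> R \<and> (u,t) \<in> R)"

fun msat :: "'w set \<Rightarrow> ('w \<times> 'w) set \<Rightarrow> (nat \<Rightarrow> 'w set) \<Rightarrow> 'w \<Rightarrow> fm \<Rightarrow> bool" where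
  "msat W R V w (Var p) = (w \<in> V p)"
| "msat W R V w Bot = False"
| "msat W R V w (Neg a) = (\<not> msat W R V w a)"
| "msat W R V w (Disj a b) = (msat W R V w a \<or> msat W R V w b)"
| "msat W R V w (Box a) = (\<forall>v\<in>W. (w,v) \<in> R \<longrightarrow> msat W R V v a)"

definition mvalid :: "'w set \<Rightarrow> ('w \<times> 'w) set \<Rightarrow> fm \<Rightarrow> bool" where
  "mvalid W R a \<longleftrightarrow> (\<forall>V. \<forall>w\<in>W. msat W R V w a)"

definition mvalid_set :: "'w set \<Rightarrow> ('w \<times> 'w) set \<Rightarrow> fm set \<Rightarrow> bool" where
  "mvalid_set W R L \<longleftrightarrow> (\<forall>a\<in>L. mvalid W R a)"

text \<open>Propositional evaluation: boxed subformulas are treated as atoms.\<close>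
fun beval :: "(nat \<Rightarrow> bool) \<Rightarrow> (fm \<Rightarrow> bool) \<Rightarrow> fm \<Rightarrow> bool" where
  "beval v b (Var p) = v p"
| "beval v b Bot = False"
| "beval v b (Neg a) = (\<not> beval v b a)"
| "beval v b (Disj a c) = (beval v b a \<or> beval v b c)"
| "beval v b (Box a) = b a"

definition tautology :: "fm \<Rightarrow> bool" where
  "tautology a \<longleftrightarrow> (\<forall>v b. beval v b a)"

fun subst :: "(nat \<Rightarrow> fm) \<Rightarrow> fm \<Rightarrow> fm" where
  "subst s (Var p) = s p"
| "subst s Bot = Bot"
| "subst s (Neg a) = Neg (subst s a)"
| "subst s (Disj a c) = Disj (subst s a) (subst s c)"
| "subst s (Box a) = Box (subst s a)"

definition modal_logic :: "fm set \<Rightarrow> bool" where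
  "modal_logic L \<longleftrightarrow>
     (\<forall>a. tautology a \<longrightarrow> a \<in> L)
   \<and> (\<forall>a b. Imp (Box (Imp a b)) (Imp (Box a) (Box b)) \<in> L)
   \<and> (\<forall>a s. a \<in> L \<longrightarrow> subst s a \<in> L)
   \<and> (\<forall>a b. a \<in> L \<longrightarrow> Imp a b \<in> L \<longrightarrow> b \<in> L)
   \<and> (\<forall>a. a \<in> L \<longrightarrow> Box a \<in> L)"

definition euclidean_logic :: "fm set \<Rightarrow> bool" where
  "euclidean_logic L \<longleftrightarrow> modal_logic L \<and> Bot \<notin> L \<and> (\<forall>a. Imp (Dia a) (Box (Dia a)) \<in> L)"

definition K5 :: "fm set" where
  "K5 = \<Inter> {L. modal_logic L \<and> (\<forall>a. Imp (Dia a) (Box (Dia a)) \<in> L)}"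

definition K5_plus :: "fm \<Rightarrow> fm set" where
  "K5_plus \<phi> = \<Inter> {L. modal_logic L \<and> K5 \<subseteq> L \<and> \<phi> \<in> L}"

definition flower_W :: "nat \<Rightarrow> int \<Rightarrow> nat set" where
  "flower_W m n = (if n = -1 then {1..m} else {0..m + nat n})"

definition flower_R :: "nat \<Rightarrow> int \<Rightarrow> (nat \<times> nat) set" where
  "flower_R m n = (if n = -1 then {1..m} \<times> {1..m}
     else ({0} \<times> {1..m}) \<union> ({1..m + nat n} \<times> {1..m + nat n}))"

definition S_L :: "fm set \<Rightarrow> (nat \<times> int) set" where
  "S_L L = {(m,n). m \<ge> 1 \<and> n \<ge> -1 \<and> mvalid_set (flower_W m n) (flower_R m n) L}"

definition exceptional :: "(nat \<times> int) set" where
  "exceptional = {(m,n). m = 1 \<and> n \<ge> -1} \<union> {(m,n). m \<ge> 1 \<and> n \<in> {-1,0,1}}"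

datatype fof = FBot | FEq nat nat | FRel nat nat | FNeg fof | FConj fof fof | FDisj fof fof
  | FImp fof fof | FEx nat fof | FAll nat fof

fun fv :: "fof \<Rightarrow> nat set" where
  "fv FBot = {}"
| "fv (FEq x y) = {x, y}"
| "fv (FRel x y) = {x, y}"
| "fv (FNeg a) = fv a"
| "fv (FConj a b) = fv a \<union> fv b"
| "fv (FDisj a b) = fv a \<union> fv b"
| "fv (FImp a b) = fv a \<union> fv b"
| "fv (FEx x a) = fv a - {x}"
| "fv (FAll x a) = fv a - {x}"

definition sentence :: "fof \<Rightarrow> bool" where "sentence A \<longleftrightarrow> fv A = {}"

fun qd :: "fof \<Rightarrow> nat" where
  "qd FBot = 0"
| "qd (FEq x y) = 0"
| "qd (FRel x y) = 0"
| "qd (FNeg a) = qd a"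
| "qd (FConj a b) = max (qd a) (qd b)"
| "qd (FDisj a b) = max (qd a) (qd b)"
| "qd (FImp a b) = max (qd a) (qd b)"
| "qd (FEx x a) = Suc (qd a)"
| "qd (FAll x a) = Suc (qd a)"

fun fsat :: "'w set \<Rightarrow> ('w \<times> 'w) set \<Rightarrow> (nat \<Rightarrow> 'w) \<Rightarrow> fof \<Rightarrow> bool" where
  "fsat W R g FBot = False"
| "fsat W R g (FEq x y) = (g x = g y)"
| "fsat W R g (FRel x y) = ((g x, g y) \<in> R)"
| "fsat W R g (FNeg a) = (\<not> fsat W R g a)"
| "fsat W R g (FConj a b) = (fsat W R g a \<and> fsat W R g b)"
| "fsat W R g (FDisj a b) = (fsat W R g a \<or> fsat W R g b)"
| "fsat W R g (FImp a b) = (fsat W R g a \<longrightarrow> fsat W R g b)"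
| "fsat W R g (FEx x a) = (\<exists>d\<in>W. fsat W R (g(x := d)) a)"
| "fsat W R g (FAll x a) = (\<forall>d\<in>W. fsat W R (g(x := d)) a)"

definition fo_valid :: "'w set \<Rightarrow> ('w \<times> 'w) set \<Rightarrow> fof \<Rightarrow> bool" where
  "fo_valid W R A \<longleftrightarrow> (\<forall>g. (\<forall>i. g i \<in> W) \<longrightarrow> fsat W R g A)"

definition Fr :: "fm set \<Rightarrow> ('w set \<times> ('w \<times> 'w) set) set" where
  "Fr L = {(W,R). is_frame W R \<and> mvalid_set W R L}"

definition Th :: "('w set \<times> ('w \<times> 'w) set) set \<Rightarrow> fof set" where
  "Th C = {A. sentence A \<and> (\<forall>(W,R)\<in>C. fo_valid W R A)}"

end

theory Submission
  imports Defs
begin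


definition res :: "('w \<times> 'w) set \<Rightarrow> 'w set \<Rightarrow> ('w \<times> 'w) set" where
  "res R X = R \<inter> (X \<times> X)"

lemma finite_fv: "finite (fv a)"
  by (induction a) auto

lemma fsat_agree: "(\<forall>x\<in>fv a. g x = g' x) \<Longrightarrow> fsat W R g a = fsat W R g' a"
proof (induction a arbitrary: g g')
  case (FConj a b)
  have "fsat W R g a = fsat W R g' a" "fsat W R g b = fsat W R g' b"
    using FConj by auto
  then show ?case by simp
next
  case (FDisj a b)
  have "fsat W R g a = fsat W R g' a" "fsat W R g b = fsat W R g' b"
    using FDisj by auto
  then show ?case by simp
next
  case (FImp a b)
  have "fsat W R g a = fsat W R g' a" "fsat W R g b = fsat W R g' b"
    using FImp by auto
  then show ?case by simp
next
  case (FEx x a)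
  have "\<And>d. fsat W R (g(x:=d)) a = fsat W R (g'(x:=d)) a"
    using FEx.IH FEx.prems by auto
  then show ?case by simp
next
  case (FAll x a)
  have "\<And>d. fsat W R (g(x:=d)) a = fsat W R (g'(x:=d)) a"
    using FAll.IH FAll.prems by auto
  then show ?case by simp
qed auto

lemma comp_upd: "(\<sigma> \<circ> g)(x := \<sigma> d) = \<sigma> \<circ> (g(x:=d))"
  by (rule ext) simp

definition aut :: "'w set \<Rightarrow> ('w \<times> 'w) set \<Rightarrow> ('w \<Rightarrow> 'w) \<Rightarrow> bool" where
  "aut W R \<sigma> \<longleftrightarrow> bij_betw \<sigma> W W \<and> (\<forall>a\<in>W. \<forall>b\<in>W. (a,b)\<in>R \<longleftrightarrow> (\<sigma> a, \<sigma> b)\<in>R)"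

lemma bex_im: assumes "f ` A = A" shows "(\<exists>d\<in>A. P d) = (\<exists>d\<in>A. P (f d))"
proof
  assume "\<exists>d\<in>A. P d"
  then obtain d where "d \<in> A" "P d" by blast
  then obtain d' where "d' \<in> A" "d = f d'" using assms by (metis imageE)
  then show "\<exists>d\<in>A. P (f d)" using \<open>P d\<close> by blast
next
  assume "\<exists>d\<in>A. P (f d)"
  then obtain d where "d \<in> A" "P (f d)" by blast
  moreover have "f d \<in> A" using assms \<open>d \<in> A\<close> by blast
  ultimately show "\<exists>d\<in>A. P d" by blast
qed

lemma ball_im: assumes "f ` A = A" shows "(\<forall>d\<in>A. P d) = (\<forall>d\<in>A. P (f d))"
  using bex_im[OF assms, of "\<lambda>d. \<not> P d"] by blast

lemma fsat_aut:
  assumes "aut W R \<sigma>" "\<forall>i. g i \<in> W"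
  shows "fsat W R (\<sigma> \<circ> g) a = fsat W R g a"
  using assms(2)
proof (induction a arbitrary: g)
  case (FEq x y)
  then show ?case using assms(1) unfolding aut_def bij_betw_def inj_on_def by auto
next
  case (FRel x y)
  then show ?case using assms(1) unfolding aut_def by auto
next
  case (FEx x a)
  have im: "\<sigma> ` W = W" using assms(1) unfolding aut_def bij_betw_def by auto
  have e: "fsat W R (\<sigma> \<circ> (g(x:=d))) a = fsat W R (g(x:=d)) a" if "d \<in> W" for d
  proof -
    have "\<forall>i. (g(x:=d)) i \<in> W" using that FEx.prems by simp
    then show ?thesis by (rule FEx.IH)
  qed
  have "(\<exists>d\<in>W. fsat W R ((\<sigma> \<circ> g)(x:=d)) a) = (\<exists>d\<in>W. fsat W R ((\<sigma> \<circ> g)(x:=\<sigma> d)) a)"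
    by (rule bex_im[OF im])
  also have "\<dots> = (\<exists>d\<in>W. fsat W R (\<sigma> \<circ> (g(x:=d))) a)"
    by (simp only: comp_upd)
  also have "\<dots> = (\<exists>d\<in>W. fsat W R (g(x:=d)) a)"
    by (rule bex_cong[OF refl]) (rule e)
  finally show ?case by (simp only: fsat.simps)
next
  case (FAll x a)
  have im: "\<sigma> ` W = W" using assms(1) unfolding aut_def bij_betw_def by auto
  have e: "fsat W R (\<sigma> \<circ> (g(x:=d))) a = fsat W R (g(x:=d)) a" if "d \<in> W" for d
  proof -
    have "\<forall>i. (g(x:=d)) i \<in> W" using that FAll.prems by simp
    then show ?thesis by (rule FAll.IH)
  qed
  have "(\<forall>d\<in>W. fsat W R ((\<sigma> \<circ> g)(x:=d)) a) = (\<forall>d\<in>W. fsat W R ((\<sigma> \<circ> g)(x:=\<sigma> d)) a)"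
    by (rule ball_im[OF im])
  also have "\<dots> = (\<forall>d\<in>W. fsat W R (\<sigma> \<circ> (g(x:=d))) a)"
    by (simp only: comp_upd)
  also have "\<dots> = (\<forall>d\<in>W. fsat W R (g(x:=d)) a)"
    by (rule ball_cong[OF refl]) (rule e)
  finally show ?case by (simp only: fsat.simps)
qed auto

definition TVcrit :: "'w set \<Rightarrow> ('w \<times> 'w) set \<Rightarrow> 'w set \<Rightarrow> nat \<Rightarrow> bool" where
  "TVcrit W R W' q \<longleftrightarrow> (\<forall>S. S \<subseteq> W' \<and> finite S \<and> card S < q \<longrightarrow>
      (\<forall>d\<in>W. \<exists>\<sigma>. aut W R \<sigma> \<and> (\<forall>s\<in>S. \<sigma> s = s) \<and> \<sigma> d \<in> W'))"

lemma card_fv_quant: "card (fv a) \<le> Suc (card (fv a - {x}))"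
proof -
  have "card (fv a) \<le> card (insert x (fv a - {x}))"
    by (rule card_mono) (auto simp: finite_fv)
  also have "\<dots> \<le> Suc (card (fv a - {x}))"
    by (simp add: card_insert_if finite_fv, arith)
  finally show ?thesis .
qed

lemma tv_main:
  assumes RW: "R \<subseteq> W \<times> W" and sub: "W' \<subseteq> W" and tv: "TVcrit W R W' q"
  shows "\<forall>i. g i \<in> W' \<Longrightarrow> card (fv a) + qd a \<le> q \<Longrightarrow> fsat W' (res R W') g a = fsat W R g a"
proof (induction a arbitrary: g)
  case (FRel x y)
  then show ?case by (auto simp: res_def)
next
  case (FNeg a) then show ?case by simp
next
  case (FConj a b)
  have "card (fv a) \<le> card (fv (FConj a b))" "card (fv b) \<le> card (fv (FConj a b))"
    by (simp_all add: card_mono finite_fv)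
  then show ?case using FConj by simp
next
  case (FDisj a b)
  have "card (fv a) \<le> card (fv (FDisj a b))" "card (fv b) \<le> card (fv (FDisj a b))"
    by (simp_all add: card_mono finite_fv)
  then show ?case using FDisj by simp
next
  case (FImp a b)
  have "card (fv a) \<le> card (fv (FImp a b))" "card (fv b) \<le> card (fv (FImp a b))"
    by (simp_all add: card_mono finite_fv)
  then show ?case using FImp by simp
next
  case (FEx x a)
  have c: "card (fv a) + qd a \<le> q" using FEx.prems(2) card_fv_quant[of a x] by simp
  have ih: "fsat W' (res R W') (g(x:=d)) a = fsat W R (g(x:=d)) a" if "d \<in> W'" for d
  proof -
    have "\<forall>i. (g(x:=d)) i \<in> W'" using that FEx.prems(1) by simp
    then show ?thesis by (rule FEx.IH[OF _ c])
  qed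
  show ?case
  proof
    assume "fsat W' (res R W') g (FEx x a)"
    then show "fsat W R g (FEx x a)" using ih sub by auto
  next
    assume "fsat W R g (FEx x a)"
    then obtain d where d: "d \<in> W" "fsat W R (g(x:=d)) a" by auto
    define S where "S = g ` fv (FEx x a)"
    have "S \<subseteq> W'" "finite S" using FEx.prems(1) finite_fv by (auto simp: S_def)
    moreover have "card S < q" using FEx.prems(2) card_image_le[OF finite_fv, of g "FEx x a"]
      by (simp add: S_def)
    ultimately obtain \<sigma> where s: "aut W R \<sigma>" "\<forall>s\<in>S. \<sigma> s = s" "\<sigma> d \<in> W'"
      using tv d(1) unfolding TVcrit_def by blast
    have gW: "\<forall>i. (g(x:=d)) i \<in> W" using FEx.prems(1) sub d(1) by auto
    have "fsat W R (\<sigma> \<circ> (g(x:=d))) a" using fsat_aut[OF s(1) gW, of a] d(2) by (rule iffD2)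
    moreover have "\<forall>y\<in>fv a. (\<sigma> \<circ> (g(x:=d))) y = (g(x:=\<sigma> d)) y"
      using s(2) by (auto simp: S_def)
    ultimately have "fsat W R (g(x:=\<sigma> d)) a" using fsat_agree by metis
    then have "fsat W' (res R W') (g(x:=\<sigma> d)) a" using ih s(3) by simp
    then show "fsat W' (res R W') g (FEx x a)" using s(3) by auto
  qed
next
  case (FAll x a)
  have c: "card (fv a) + qd a \<le> q" using FAll.prems(2) card_fv_quant[of a x] by simp
  have ih: "fsat W' (res R W') (g(x:=d)) a = fsat W R (g(x:=d)) a" if "d \<in> W'" for d
  proof -
    have "\<forall>i. (g(x:=d)) i \<in> W'" using that FAll.prems(1) by simp
    then show ?thesis by (rule FAll.IH[OF _ c])
  qed
  show ?case
  proof
    assume "fsat W R g (FAll x a)"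
    then show "fsat W' (res R W') g (FAll x a)" using ih sub by auto
  next
    assume H: "fsat W' (res R W') g (FAll x a)"
    show "fsat W R g (FAll x a)"
    proof (rule ccontr)
      assume "\<not> fsat W R g (FAll x a)"
      then obtain d where d: "d \<in> W" "\<not> fsat W R (g(x:=d)) a" by auto
      define S where "S = g ` fv (FAll x a)"
      have "S \<subseteq> W'" "finite S" using FAll.prems(1) finite_fv by (auto simp: S_def)
      moreover have "card S < q" using FAll.prems(2) card_image_le[OF finite_fv, of g "FAll x a"]
        by (simp add: S_def)
      ultimately obtain \<sigma> where s: "aut W R \<sigma>" "\<forall>s\<in>S. \<sigma> s = s" "\<sigma> d \<in> W'"
        using tv d(1) unfolding TVcrit_def by blast
      have gW: "\<forall>i. (g(x:=d)) i \<in> W" using FAll.prems(1) sub d(1) by auto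
      have "\<not> fsat W R (\<sigma> \<circ> (g(x:=d))) a" using fsat_aut[OF s(1) gW, of a] d(2) by blast
      moreover have "\<forall>y\<in>fv a. (\<sigma> \<circ> (g(x:=d))) y = (g(x:=\<sigma> d)) y"
        using s(2) by (auto simp: S_def)
      ultimately have "\<not> fsat W R (g(x:=\<sigma> d)) a" using fsat_agree by metis
      then have "\<not> fsat W' (res R W') (g(x:=\<sigma> d)) a" using ih s(3) by simp
      then show False using s(3) H by auto
    qed
  qed
qed auto

lemma tv_valid:
  assumes RW: "R \<subseteq> W \<times> W" and sub: "W' \<subseteq> W" and tv: "TVcrit W R W' q"
    and ne: "W' \<noteq> {}" and sen: "sentence A" and qd: "qd A \<le> q"
  shows "fo_valid W' (res R W') A = fo_valid W R A"
proof -
  obtain w where w: "w \<in> W'" using ne by auto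
  have c: "card (fv A) + qd A \<le> q" using sen qd by (simp add: sentence_def)
  have eq: "\<And>g. \<forall>i. g i \<in> W' \<Longrightarrow> fsat W' (res R W') g A = fsat W R g A"
    using tv_main[OF RW sub tv] c by blast
  have ind: "fsat W R g A = fsat W R g' A" for g g'
    by (rule fsat_agree) (use sen in \<open>simp add: sentence_def\<close>)
  show ?thesis unfolding fo_valid_def
  proof
    assume H: "\<forall>g. (\<forall>i. g i \<in> W') \<longrightarrow> fsat W' (res R W') g A"
    show "\<forall>g. (\<forall>i. g i \<in> W) \<longrightarrow> fsat W R g A"
    proof (intro allI impI)
      fix g :: "nat \<Rightarrow> 'a"
      have "fsat W' (res R W') (\<lambda>_. w) A" using H w by simp
      then have "fsat W R (\<lambda>_. w) A" using eq[of "\<lambda>_. w"] w by simp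
      then show "fsat W R g A" using ind by blast
    qed
  next
    assume H: "\<forall>g. (\<forall>i. g i \<in> W) \<longrightarrow> fsat W R g A"
    show "\<forall>g. (\<forall>i. g i \<in> W') \<longrightarrow> fsat W' (res R W') g A"
    proof (intro allI impI)
      fix g :: "nat \<Rightarrow> 'a"
      assume g: "\<forall>i. g i \<in> W'"
      then have "\<forall>i. g i \<in> W" using sub by auto
      with H have "fsat W R g A" by blast
      then show "fsat W' (res R W') g A" using eq g by simp
    qed
  qed
qed



definition pmor :: "'a set \<Rightarrow> ('a \<times> 'a) set \<Rightarrow> 'b set \<Rightarrow> ('b \<times> 'b) set \<Rightarrow> 'a set \<Rightarrow> ('a \<Rightarrow> 'b) \<Rightarrow> bool" where
  "pmor W R W2 R2 U f \<longleftrightarrow> U \<subseteq> W \<and> f ` U \<subseteq> W2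
    \<and> (\<forall>a\<in>U. \<forall>b\<in>W. (a,b)\<in>R \<longrightarrow> b\<in>U \<and> (f a, f b)\<in>R2)
    \<and> (\<forall>a\<in>U. \<forall>y\<in>W2. (f a, y)\<in>R2 \<longrightarrow> (\<exists>b\<in>U. (a,b)\<in>R \<and> f b = y))"

lemma pmor_truth:
  assumes "pmor W R W2 R2 U f"
  shows "a \<in> U \<Longrightarrow> msat W R (\<lambda>p. {v\<in>U. f v \<in> V p}) a \<psi> = msat W2 R2 V (f a) \<psi>"
proof (induction \<psi> arbitrary: a)
  case (Box \<psi>)
  have fw: "\<And>a b. a \<in> U \<Longrightarrow> b \<in> W \<Longrightarrow> (a,b)\<in>R \<Longrightarrow> b\<in>U \<and> (f a, f b)\<in>R2"
    and bk: "\<And>a y. a \<in> U \<Longrightarrow> y \<in> W2 \<Longrightarrow> (f a, y)\<in>R2 \<Longrightarrow> \<exists>b\<in>U. (a,b)\<in>R \<and> f b = y"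
    and UW: "U \<subseteq> W" and fU: "f ` U \<subseteq> W2"
    using assms unfolding pmor_def by blast+
  show ?case
  proof
    assume H: "msat W R (\<lambda>p. {v\<in>U. f v \<in> V p}) a (Box \<psi>)"
    show "msat W2 R2 V (f a) (Box \<psi>)"
    proof (simp, intro ballI impI)
      fix y assume y: "y \<in> W2" "(f a, y) \<in> R2"
      obtain b where b: "b \<in> U" "(a,b)\<in>R" "f b = y" using bk[OF Box.prems y] by blast
      have "msat W R (\<lambda>p. {v\<in>U. f v \<in> V p}) b \<psi>" using H b UW by auto
      then show "msat W2 R2 V y \<psi>" using Box.IH[OF b(1)] b(3) by simp
    qed
  next
    assume H: "msat W2 R2 V (f a) (Box \<psi>)"
    show "msat W R (\<lambda>p. {v\<in>U. f v \<in> V p}) a (Box \<psi>)"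
    proof (simp only: msat.simps, intro ballI impI)
      fix b assume b: "b \<in> W" "(a,b) \<in> R"
      have "b \<in> U" "(f a, f b) \<in> R2" using fw[OF Box.prems b] by auto
      moreover have "f b \<in> W2" using fU \<open>b \<in> U\<close> by auto
      ultimately have "msat W2 R2 V (f b) \<psi>" using H by auto
      then show "msat W R (\<lambda>p. {v\<in>U. f v \<in> V p}) b \<psi>" using Box.IH[OF \<open>b \<in> U\<close>] by simp
    qed
  qed
qed auto

lemma mvalid_pmor:
  assumes "mvalid W R \<psi>" and "\<forall>y\<in>W2. \<exists>U f. pmor W R W2 R2 U f \<and> y \<in> f ` U"
  shows "mvalid W2 R2 \<psi>"
  unfolding mvalid_def
proof (intro allI ballI)
  fix V y assume y: "y \<in> W2"
  obtain U f where p: "pmor W R W2 R2 U f" and yU: "y \<in> f ` U" using assms(2) y by blast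
  obtain a where a: "a \<in> U" "y = f a" using yU by blast
  have "a \<in> W" using p a unfolding pmor_def by blast
  then have "msat W R (\<lambda>p. {v\<in>U. f v \<in> V p}) a \<psi>" using assms(1) unfolding mvalid_def by blast
  then show "msat W2 R2 V y \<psi>" using pmor_truth[OF p a(1)] a(2) by simp
qed

lemma msat_beval: "msat W R V w a = beval (\<lambda>p. w \<in> V p) (\<lambda>c. msat W R V w (Box c)) a"
  by (induction a) auto

lemma msat_subst: "msat W R V w (subst s a) = msat W R (\<lambda>p. {v. msat W R V v (s p)}) w a"
  by (induction a arbitrary: w) auto

lemma valid_modal_logic: "modal_logic {a. mvalid W R a}"
  unfolding modal_logic_def
proof (intro conjI allI impI)
  fix a assume "tautology a"
  then show "a \<in> {a. mvalid W R a}"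
    unfolding mvalid_def tautology_def by (simp add: msat_beval[of W R _ _ a])
next
  fix a b show "Imp (Box (Imp a b)) (Imp (Box a) (Box b)) \<in> {a. mvalid W R a}"
    by (auto simp: mvalid_def Imp_def)
next
  fix a s assume "a \<in> {a. mvalid W R a}"
  then show "subst s a \<in> {a. mvalid W R a}"
    by (simp add: mvalid_def msat_subst)
next
  fix a b assume "a \<in> {a. mvalid W R a}" "Imp a b \<in> {a. mvalid W R a}"
  then show "b \<in> {a. mvalid W R a}" by (auto simp: mvalid_def Imp_def)
next
  fix a assume "a \<in> {a. mvalid W R a}"
  then show "Box a \<in> {a. mvalid W R a}" by (auto simp: mvalid_def)
qed

lemma eu: "euclidean W R \<Longrightarrow> (s,t)\<in>R \<Longrightarrow> (s,u)\<in>R \<Longrightarrow> (t,u)\<in>R"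
  unfolding euclidean_def by blast

lemma eu_refl: "euclidean W R \<Longrightarrow> (s,t)\<in>R \<Longrightarrow> (t,t)\<in>R"
  unfolding euclidean_def by blast

lemma euclid_res: "euclidean W R \<Longrightarrow> euclidean W' (res R W')"
  unfolding euclidean_def res_def by blast

lemma valid_K5plus:
  assumes "euclidean W R" "mvalid W R \<phi>"
  shows "mvalid_set W R (K5_plus \<phi>)"
proof -
  let ?M = "{a. mvalid W R a}"
  have ml: "modal_logic ?M" by (rule valid_modal_logic)
  have ax1: "Imp (Dia a) (Box (Dia a)) \<in> ?M" for a
  proof -
    have "msat W R V w (Imp (Dia a) (Box (Dia a)))" for V w
    proof -
      have "msat W R V u (Dia a)" if "(w,v) \<in> R" "v \<in> W" "msat W R V v a" "(w,u) \<in> R" for u v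
        using that eu[OF assms(1) that(4) that(1)] by (auto simp: Dia_def)
      then show ?thesis by (auto simp: Imp_def Dia_def)
    qed
    then show ?thesis by (simp add: mvalid_def)
  qed
  then have ax: "\<forall>a. Imp (Dia a) (Box (Dia a)) \<in> ?M" by blast
  have "K5 \<subseteq> ?M" unfolding K5_def using ml ax by (intro Inter_lower) simp
  then have "K5_plus \<phi> \<subseteq> ?M" unfolding K5_plus_def using ml assms(2) by (intro Inter_lower) simp
  then show ?thesis unfolding mvalid_set_def by blast
qed

lemma K5plus_phi: "\<phi> \<in> K5_plus \<phi>"
  unfolding K5_plus_def by blast

lemma K5plus_ax: "Imp (Dia a) (Box (Dia a)) \<in> K5_plus \<phi>"
  unfolding K5_plus_def K5_def by blast

lemma frame_euclid:
  assumes RW: "R \<subseteq> W \<times> W" and v: "mvalid W R (Imp (Dia (Var 0)) (Box (Dia (Var 0))))"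
  shows "euclidean W R"
proof -
  have key: "(t,u) \<in> R" if "(s,t) \<in> R" "(s,u) \<in> R" for s t u
  proof -
    have sW: "s \<in> W" "t \<in> W" "u \<in> W" using that RW by auto
    have "msat W R (\<lambda>_. {u}) s (Imp (Dia (Var 0)) (Box (Dia (Var 0))))"
      using v sW unfolding mvalid_def by blast
    then show ?thesis using that sW by (auto simp: Imp_def Dia_def)
  qed
  show ?thesis unfolding euclidean_def using key by blast
qed

lemma Fr_char:
  assumes "R \<subseteq> W \<times> W"
  shows "mvalid_set W R (K5_plus \<phi>) \<longleftrightarrow> euclidean W R \<and> mvalid W R \<phi>"
  using valid_K5plus frame_euclid[OF assms] K5plus_phi K5plus_ax
  unfolding mvalid_set_def by blast

lemma sub_valid:
  assumes RW: "R \<subseteq> W \<times> W" and E: "euclidean W R" and sub: "W' \<subseteq> W"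
    and sp: "\<forall>w\<in>W'. (\<exists>v. (w,v)\<in>R) \<longrightarrow> (\<exists>v\<in>W'. (w,v)\<in>R)"
    and val: "mvalid W R \<psi>"
  shows "mvalid W' (res R W') \<psi>"
proof (rule mvalid_pmor[OF val], intro ballI)
  fix y assume y: "y \<in> W'"
  show "\<exists>U f. pmor W R W' (res R W') U f \<and> y \<in> f ` U"
  proof (cases "\<exists>v. (y,v)\<in>R")
    case False
    have "pmor W R W' (res R W') {y} id"
      unfolding pmor_def using False y sub by (auto simp: res_def)
    then show ?thesis by force
  next
    case True
    then obtain s0 where s0: "s0 \<in> W'" "(y,s0) \<in> R" using sp y by blast
    have ss: "(s0,s0) \<in> R" using eu_refl[OF E s0(2)] .
    define U where "U = insert y (R `` {s0})"
    define f where "f v = (if v \<in> W' then v else s0)" for v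
    have inU: "(a,s0) \<in> R" if "a \<in> U" for a
    proof (cases "a = y")
      case True then show ?thesis using s0 by simp
    next
      case False then have "(s0,a) \<in> R" using that unfolding U_def by auto
      then show ?thesis using eu[OF E _ ss] by blast
    qed
    have s0U: "(s0,b) \<in> R" if "a \<in> U" "(a,b) \<in> R" for a b
      using eu[OF E inU[OF that(1)] that(2)] .
    have Ucl: "b \<in> U" if "a \<in> U" "(a,b) \<in> R" for a b
      using s0U[OF that] unfolding U_def by blast
    have bck: "(a,b)\<in>R" if "a \<in> U" "a \<notin> W'" "(s0,b)\<in>R" for a b
    proof -
      have "a \<noteq> y" using that y by auto
      then have "(s0,a) \<in> R" using that unfolding U_def by auto
      then show ?thesis using eu[OF E _ that(3)] by blast
    qed
    have fR: "(f a, f b) \<in> R" if "a \<in> U" "(a,b) \<in> R" for a b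
    proof -
      have as0: "(a,s0) \<in> R" using inU[OF that(1)] .
      have s0b: "(s0,b) \<in> R" using s0U[OF that] .
      show ?thesis using as0 s0b that ss unfolding f_def by auto
    qed
    have "pmor W R W' (res R W') U f"
      unfolding pmor_def
    proof (intro conjI ballI impI)
      show "U \<subseteq> W" using RW sub y unfolding U_def by auto
      show "f ` U \<subseteq> W'" using s0 unfolding f_def by auto
    next
      fix a b assume "a \<in> U" "b \<in> W" "(a,b) \<in> R"
      then show "b \<in> U" using Ucl by blast
    next
      fix a b assume "a \<in> U" "b \<in> W" "(a,b) \<in> R"
      then show "(f a, f b) \<in> res R W'" using fR s0 unfolding res_def f_def by auto
    next
      fix a z assume a: "a \<in> U" and z: "z \<in> W'" "(f a, z) \<in> res R W'"
      show "\<exists>b\<in>U. (a,b)\<in>R \<and> f b = z"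
      proof (cases "a \<in> W'")
        case True
        then have "(a,z) \<in> R" using z unfolding f_def res_def by auto
        then show ?thesis using Ucl[OF a] z(1) unfolding f_def by auto
      next
        case False
        then have "(s0,z) \<in> R" using z unfolding f_def res_def by auto
        then show ?thesis using bck[OF a False] z(1) unfolding f_def U_def by auto
      qed
    qed
    moreover have "y \<in> f ` U" using y unfolding U_def f_def by force
    ultimately show ?thesis by blast
  qed
qed



lemma surj_interval:
  assumes "finite A" "card A = m"
  shows "\<exists>e. e ` A = {Suc a..a+m}"
proof -
  obtain h where h: "bij_betw h A {0..<m}" using ex_bij_betw_finite_nat[OF assms(1)] assms(2) by auto
  have hA: "h ` A = {0..<m}" using h unfolding bij_betw_def by blast
  have "(\<lambda>v. h v + Suc a) ` A = (\<lambda>i. i + Suc a) ` (h ` A)" by (simp add: image_image)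
  also have "\<dots> = (\<lambda>i. i + Suc a) ` {0..<m}" using hA by simp
  also have "\<dots> = {Suc a..a+m}"
  proof
    show "(\<lambda>i. i + Suc a) ` {0..<m} \<subseteq> {Suc a..a + m}" by auto
    show "{Suc a..a + m} \<subseteq> (\<lambda>i. i + Suc a) ` {0..<m}"
    proof
      fix y assume "y \<in> {Suc a..a+m}"
      then have "y = (y - Suc a) + Suc a" "y - Suc a \<in> {0..<m}" by auto
      then show "y \<in> (\<lambda>i. i + Suc a) ` {0..<m}" by blast
    qed
  qed
  finally show ?thesis by blast
qed

lemma flower_simps:
  "flower_W m (int n) = {0..m+n}"
  "flower_R m (int n) = ({0} \<times> {1..m}) \<union> ({1..m+n} \<times> {1..m+n})"
  by (auto simp: flower_W_def flower_R_def)

lemma flower_euclid: "euclidean (flower_W m (int n)) (flower_R m (int n))"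
  unfolding euclidean_def flower_simps by auto

lemma big_subsets:
  fixes C :: "'a set" and kk :: nat
  assumes big: "\<not> (finite C \<and> card C \<le> kk)" and SC: "S \<subseteq> C"
    and x: "x1 \<in> S" "x2 \<in> S" "x1 \<noteq> x2" and z: "z1 \<in> C - S" "z2 \<in> C - S" "z1 \<noteq> z2"
  shows "\<exists>A1 A2. A1 \<subseteq> S \<and> A2 \<subseteq> C - S \<and> finite A1 \<and> finite A2 \<and> card A1 \<ge> 2 \<and> card A2 \<ge> 2
     \<and> card A1 + card A2 \<ge> Suc kk"
proof -
  obtain B0 where B0: "B0 \<subseteq> C" "finite B0" "card B0 \<ge> Suc kk"
  proof (cases "finite C")
    case True then show ?thesis using that[of C] big by auto
  next
    case False then obtain B where "finite B" "card B = Suc kk" "B \<subseteq> C"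
      using infinite_arbitrarily_large by blast
    then show ?thesis using that by auto
  qed
  define B where "B = B0 \<union> {x1,x2,z1,z2}"
  have fB: "finite B" using B0 by (simp add: B_def)
  have BC: "B \<subseteq> C" using B0 x z SC by (auto simp: B_def)
  have "B0 \<subseteq> B" by (auto simp: B_def)
  then have "card B0 \<le> card B" using card_mono fB by blast
  then have "card B \<ge> Suc kk" using B0 by linarith
  moreover have "card B = card (B \<inter> S) + card (B - S)"
  proof -
    have "card ((B \<inter> S) \<union> (B - S)) = card (B \<inter> S) + card (B - S)"
      by (rule card_Un_disjoint) (use fB in auto)
    moreover have "(B \<inter> S) \<union> (B - S) = B" by blast
    ultimately show ?thesis by simp
  qed
  moreover have "card (B \<inter> S) \<ge> 2"
  proof -
    have "{x1,x2} \<subseteq> B \<inter> S" using x by (auto simp: B_def)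
    then have "card {x1,x2} \<le> card (B \<inter> S)" using fB by (intro card_mono) auto
    then show ?thesis using x by simp
  qed
  moreover have "card (B - S) \<ge> 2"
  proof -
    have "{z1,z2} \<subseteq> B - S" using z by (auto simp: B_def)
    then have "card {z1,z2} \<le> card (B - S)" using fB by (intro card_mono) auto
    then show ?thesis using z by simp
  qed
  ultimately show ?thesis using BC fB
    by (intro exI[of _ "B \<inter> S"] exI[of _ "B - S"]) auto
qed

locale efr =
  fixes W :: "'w set" and R :: "('w \<times> 'w) set"
  assumes RW: "R \<subseteq> W \<times> W" and E: "euclidean W R"
begin

lemma refl_succ: "(v,w) \<in> R \<Longrightarrow> (w,w) \<in> R"
  using eu_refl[OF E] .

lemma clus: "(c,a) \<in> R \<Longrightarrow> (c,b) \<in> R \<Longrightarrow> (a,b) \<in> R"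
  using eu[OF E] .

lemma clus2: "(c,c) \<in> R \<Longrightarrow> (c,a) \<in> R \<Longrightarrow> (a,b) \<in> R \<Longrightarrow> (c,b) \<in> R"
  by (meson clus)

lemma root_sub: "(r,c) \<in> R \<Longrightarrow> (r,v) \<in> R \<Longrightarrow> (c,v) \<in> R"
  using eu[OF E] .

end

locale efrv = efr W R for W :: "'w set" and R +
  fixes \<phi> :: fm and kk :: nat
  assumes kk4: "kk \<ge> 4" and val: "mvalid W R \<phi>"
    and nofl: "\<forall>m n::nat. m \<ge> 2 \<longrightarrow> n \<ge> 2 \<longrightarrow> m + n = Suc kk \<longrightarrow>
                 \<not> mvalid (flower_W m (int n)) (flower_R m (int n)) \<phi>"
begin

lemma classify:
  assumes cc: "(c,c) \<in> R" and rc: "(r,c) \<in> R" and big: "\<not> (finite (R``{c}) \<and> card (R``{c}) \<le> kk)"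
  shows "(\<exists>x. R``{r} = {x}) \<or> R``{r} = R``{c} \<or> (\<exists>z\<in>R``{c}. R``{r} = R``{c} - {z})"
proof (rule ccontr)
  assume H: "\<not> ?thesis"
  define S where "S = R``{r}"
  define C where "C = R``{c}"
  have SC: "S \<subseteq> C" using root_sub[OF rc] by (auto simp: S_def C_def)
  have cS: "c \<in> S" using rc by (simp add: S_def)
  have rirr: "(r,r) \<notin> R"
  proof
    assume rr: "(r,r) \<in> R"
    have "R``{r} = R``{c}"
    proof
      show "R``{r} \<subseteq> R``{c}" using root_sub[OF rc] by auto
      have cr: "(c,r) \<in> R" using clus[OF rc rr] .
      show "R``{c} \<subseteq> R``{r}"
      proof
        fix v assume "v \<in> R``{c}"
        then have "(c,v) \<in> R" by simp
        then show "v \<in> R``{r}" using clus[OF cr] by simp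
      qed
    qed
    then show False using H by blast
  qed
  have rC: "r \<notin> C"
  proof
    assume "r \<in> C"
    then have "(c,r) \<in> R" by (simp add: C_def)
    then show False using refl_succ rirr by blast
  qed
  obtain x1 x2 where x: "x1 \<in> S" "x2 \<in> S" "x1 \<noteq> x2"
  proof -
    obtain x2 where "x2 \<in> S" "x2 \<noteq> c" using H cS unfolding S_def by blast
    then show ?thesis using that cS by blast
  qed
  obtain z1 where z1: "z1 \<in> C - S" using H SC unfolding S_def C_def by blast
  obtain z2 where z2: "z2 \<in> C - S" "z2 \<noteq> z1"
  proof -
    have "S \<noteq> C - {z1}" using H z1 unfolding S_def C_def by blast
    moreover have "S \<subseteq> C - {z1}" using SC z1 by blast
    ultimately show ?thesis using that by blast
  qed
  obtain A1 A2 where A: "A1 \<subseteq> S" "A2 \<subseteq> C - S" "finite A1" "finite A2" "card A1 \<ge> 2" "card A2 \<ge> 2"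
     "card A1 + card A2 \<ge> Suc kk"
    using big_subsets[of C kk S x1 x2 z1 z2] big SC x z1 z2 unfolding C_def by blast
  define m where "m = min (card A1) (kk - 1)"
  define n where "n = Suc kk - m"
  have mn: "m \<ge> 2" "n \<ge> 2" "m + n = Suc kk" "m \<le> card A1" "n \<le> card A2"
    using A kk4 unfolding m_def n_def by auto
  obtain A1' where A1': "A1' \<subseteq> A1" "card A1' = m" "finite A1'"
    using obtain_subset_with_card_n[OF mn(4)] by blast
  obtain A2' where A2': "A2' \<subseteq> A2" "card A2' = n" "finite A2'"
    using obtain_subset_with_card_n[OF mn(5)] by blast
  obtain e1 where e1: "e1 ` A1' = {Suc 0..m}" using surj_interval[OF A1'(3) A1'(2), of 0] by auto
  obtain e2 where e2: "e2 ` A2' = {Suc m..m+n}" using surj_interval[OF A2'(3) A2'(2), of m] by auto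
  define f where "f v = (if v = r then 0 else if v \<in> S then (if v \<in> A1' then e1 v else 1)
      else (if v \<in> A2' then e2 v else Suc m))" for v
  define U where "U = insert r C"
  have fS: "f v \<in> {1..m}" if "v \<in> S" for v
    using that e1 mn rirr unfolding f_def S_def by (auto simp: image_subset_iff)
  have fC: "f v \<in> {1..m+n}" if "v \<in> C" for v
  proof (cases "v \<in> S")
    case True then show ?thesis using fS by force
  next
    case False
    then have "v \<noteq> r" using that rC by auto
    moreover have "v \<in> A2' \<Longrightarrow> e2 v \<in> {Suc m..m+n}" using e2 by blast
    ultimately show ?thesis using False mn unfolding f_def by auto
  qed
  have CR: "(a,b) \<in> R" if "a \<in> C" "b \<in> C" for a b
    using that clus[of c a b] unfolding C_def by simp
  have Ccl: "b \<in> C" if "a \<in> C" "(a,b) \<in> R" for a b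
    using that clus2[OF cc, of a b] unfolding C_def by simp
  have "pmor W R (flower_W m (int n)) (flower_R m (int n)) U f"
    unfolding pmor_def flower_simps
  proof (intro conjI ballI impI)
    show "U \<subseteq> W" using RW rc unfolding U_def C_def by auto
    show "f ` U \<subseteq> {0..m+n}" using fC unfolding U_def by (force simp: f_def)
  next
    fix a b assume a: "a \<in> U" "b \<in> W" "(a,b) \<in> R"
    show "b \<in> U"
    proof (cases "a = r")
      case True then show ?thesis using a SC unfolding U_def S_def by auto
    next
      case False then show ?thesis using a Ccl unfolding U_def by auto
    qed
    show "(f a, f b) \<in> {0} \<times> {1..m} \<union> {1..m + n} \<times> {1..m + n}"
    proof (cases "a = r")
      case True
      then have "b \<in> S" using a unfolding S_def by auto
      then show ?thesis using fS True unfolding f_def by auto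
    next
      case False
      then have "a \<in> C" "b \<in> C" using a Ccl unfolding U_def by auto
      then show ?thesis using fC by auto
    qed
  next
    fix a y assume a: "a \<in> U" and y: "y \<in> {0..m+n}" "(f a, y) \<in> {0} \<times> {1..m} \<union> {1..m + n} \<times> {1..m + n}"
    show "\<exists>b\<in>U. (a, b) \<in> R \<and> f b = y"
    proof (cases "a = r")
      case True
      then have "y \<in> {1..m}" using y by (auto simp: f_def)
      then obtain b where b: "b \<in> A1'" "e1 b = y" using e1 by (metis One_nat_def imageE)
      then have bS: "b \<in> S" using A A1' by auto
      then have "f b = y" using b rirr unfolding f_def S_def by auto
      then show ?thesis using bS True SC unfolding U_def S_def by auto
    next
      case False
      then have aC: "a \<in> C" using a unfolding U_def by auto
      then have y1: "y \<in> {1..m+n}" using y fC by force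
      show ?thesis
      proof (cases "y \<le> m")
        case True
        then have "y \<in> {1..m}" using y1 by auto
        then obtain b where b: "b \<in> A1'" "e1 b = y" using e1 by (metis One_nat_def imageE)
        then have bS: "b \<in> S" using A A1' by auto
        then have "f b = y" using b rirr unfolding f_def S_def by auto
        then show ?thesis using bS SC CR[OF aC] unfolding U_def by auto
      next
        case False
        then have "y \<in> {Suc m..m+n}" using y1 by auto
        then obtain b where b: "b \<in> A2'" "e2 b = y" using e2 by (metis imageE)
        then have bS: "b \<in> C - S" using A A2' by auto
        then have "b \<noteq> r" using rC by auto
        then have "f b = y" using b bS unfolding f_def by auto
        then show ?thesis using bS CR[OF aC] unfolding U_def by auto
      qed
    qed
  qed
  moreover have "\<forall>y\<in>flower_W m (int n). y \<in> f ` U"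
  proof
    fix y assume "y \<in> flower_W m (int n)"
    then have y: "y \<in> {0..m+n}" by (simp add: flower_simps)
    show "y \<in> f ` U"
    proof (cases "y = 0")
      case True then show ?thesis unfolding U_def f_def by force
    next
      case False
      show ?thesis
      proof (cases "y \<le> m")
        case True
        then have "y \<in> {1..m}" using False by auto
        then obtain b where b: "b \<in> A1'" "e1 b = y" using e1 by (metis One_nat_def imageE)
        then have bS: "b \<in> S" using A A1' by auto
        then have "f b = y" using b rirr unfolding f_def S_def by auto
        then show ?thesis using bS SC unfolding U_def by auto
      next
        case False
        then have "y \<in> {Suc m..m+n}" using y by auto
        then obtain b where b: "b \<in> A2'" "e2 b = y" using e2 by (metis imageE)
        then have bS: "b \<in> C - S" using A A2' by auto
        then have "b \<noteq> r" using rC by auto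
        then have "f b = y" using b bS unfolding f_def by auto
        then show ?thesis using bS unfolding U_def by auto
      qed
    qed
  qed
  ultimately have "\<forall>y\<in>flower_W m (int n). \<exists>U f. pmor W R (flower_W m (int n)) (flower_R m (int n)) U f \<and> y \<in> f ` U"
    by blast
  then have "mvalid (flower_W m (int n)) (flower_R m (int n)) \<phi>"
    by (rule mvalid_pmor[OF val])
  then show False using nofl[rule_format, OF mn(1) mn(2) mn(3)] by blast
qed

end



definition cap :: "nat \<Rightarrow> 'a set \<Rightarrow> 'a set" where
  "cap q X = (SOME K. K \<subseteq> X \<and> finite K \<and> card K \<le> q \<and> (X \<subseteq> K \<or> card K = q))"

lemma cap_ex: "\<exists>K. K \<subseteq> X \<and> finite K \<and> card K \<le> q \<and> (X \<subseteq> K \<or> card K = q)"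
proof (cases "finite X \<and> card X \<le> q")
  case True then show ?thesis by blast
next
  case False
  show ?thesis
  proof (cases "finite X")
    case True
    then have "q \<le> card X" using False by auto
    then obtain K where "K \<subseteq> X" "card K = q" "finite K" using obtain_subset_with_card_n by metis
    then show ?thesis by blast
  next
    case False
    then obtain K where "finite K" "card K = q" "K \<subseteq> X" using infinite_arbitrarily_large by blast
    then show ?thesis by blast
  qed
qed

lemma cap_props:
  "cap q X \<subseteq> X" "finite (cap q X)" "card (cap q X) \<le> q" "X \<subseteq> cap q X \<or> card (cap q X) = q"
  using someI_ex[OF cap_ex[of X q]] unfolding cap_def by blast+

lemma cap_nonempty: "x \<in> X \<Longrightarrow> q > 0 \<Longrightarrow> cap q X \<noteq> {}"
  using cap_props[where q=q and X=X] by auto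

lemma cap_avoid:
  assumes "x \<in> X" "x \<notin> cap q X" "finite S" "card S < q"
  shows "\<exists>r\<in>cap q X. r \<notin> S"
proof (rule ccontr)
  assume "\<not> ?thesis"
  then have "cap q X \<subseteq> S" by blast
  then have "card (cap q X) \<le> card S" using assms(3) card_mono by blast
  moreover have "card (cap q X) = q" using cap_props(4)[where q=q and X=X] assms(1,2) by blast
  ultimately show False using assms(4) by simp
qed

lemma inv_bij:
  assumes "\<forall>v\<in>W. \<sigma> v \<in> W \<and> \<sigma> (\<sigma> v) = v"
  shows "bij_betw \<sigma> W W"
  unfolding bij_betw_def inj_on_def
proof (intro conjI ballI impI)
  fix a b assume "a \<in> W" "b \<in> W" "\<sigma> a = \<sigma> b"
  then show "a = b" using assms by metis
next
  show "\<sigma> ` W = W"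
  proof
    show "\<sigma> ` W \<subseteq> W" using assms by auto
    show "W \<subseteq> \<sigma> ` W"
    proof
      fix v assume "v \<in> W"
      then have "\<sigma> v \<in> W" "v = \<sigma> (\<sigma> v)" using assms by auto
      then show "v \<in> \<sigma> ` W" by blast
    qed
  qed
qed

lemma aut_inv:
  assumes "\<forall>v\<in>W. \<sigma> v \<in> W \<and> \<sigma> (\<sigma> v) = v"
    and "\<And>a b. a \<in> W \<Longrightarrow> b \<in> W \<Longrightarrow> (a,b) \<in> R \<Longrightarrow> (\<sigma> a, \<sigma> b) \<in> R"
  shows "aut W R \<sigma>"
  unfolding aut_def
proof (intro conjI ballI)
  show "bij_betw \<sigma> W W" by (rule inv_bij[OF assms(1)])
next
  fix a b assume ab: "a \<in> W" "b \<in> W"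
  show "((a, b) \<in> R) = ((\<sigma> a, \<sigma> b) \<in> R)"
  proof
    assume "(a,b) \<in> R" then show "(\<sigma> a, \<sigma> b) \<in> R" using assms(2) ab by blast
  next
    assume "(\<sigma> a, \<sigma> b) \<in> R"
    then have "(\<sigma> (\<sigma> a), \<sigma> (\<sigma> b)) \<in> R" using assms ab by blast
    then show "(a,b) \<in> R" using assms(1) ab by simp
  qed
qed

definition bswap :: "('a \<Rightarrow> 'a) \<Rightarrow> 'a set \<Rightarrow> 'a set \<Rightarrow> 'a \<Rightarrow> 'a" where
  "bswap h A B v = (if v \<in> A then h v else if v \<in> B then inv_into A h v else v)"

lemma bswap_A: "v \<in> A \<Longrightarrow> bswap h A B v = h v"
  by (simp add: bswap_def)

lemma bswap_B:
  assumes "bij_betw h A B" "A \<inter> B = {}" "v \<in> B"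
  shows "bswap h A B v \<in> A" "h (bswap h A B v) = v"
proof -
  have nA: "v \<notin> A" using assms by blast
  have "inv_into A h v \<in> A" "h (inv_into A h v) = v"
    using assms(1,3) by (auto simp: bij_betw_def inv_into_into f_inv_into_f)
  then show "bswap h A B v \<in> A" "h (bswap h A B v) = v" using nA assms(3) by (auto simp: bswap_def)
qed

lemma bswap_B_eq:
  assumes "bij_betw h A B" "A \<inter> B = {}" "u \<in> A" "h u = v"
  shows "bswap h A B v = u"
proof -
  have vB: "v \<in> B" using assms(1,3,4) bij_betw_apply by fastforce
  then have nA: "v \<notin> A" using assms(2) by blast
  have "inv_into A h v = u" using assms(1,3,4) by (simp add: bij_betw_def inv_into_f_eq)
  then show ?thesis using nA vB by (simp add: bswap_def)
qed

lemma bswap_out: "v \<notin> A \<Longrightarrow> v \<notin> B \<Longrightarrow> bswap h A B v = v"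
  by (simp add: bswap_def)

lemma bswap_inv:
  assumes "bij_betw h A B" "A \<inter> B = {}" "A \<union> B \<subseteq> W"
  shows "\<forall>v\<in>W. bswap h A B v \<in> W \<and> bswap h A B (bswap h A B v) = v"
proof
  fix v assume vW: "v \<in> W"
  show "bswap h A B v \<in> W \<and> bswap h A B (bswap h A B v) = v"
  proof (cases "v \<in> A")
    case True
    then have hv: "h v \<in> B" using assms(1) bij_betw_apply by fastforce
    then have "bswap h A B (h v) = v" using bswap_B_eq[OF assms(1,2) True refl] by simp
    then show ?thesis using True hv assms(3) by (auto simp: bswap_A)
  next
    case False
    show ?thesis
    proof (cases "v \<in> B")
      case True
      have "bswap h A B v \<in> A" "h (bswap h A B v) = v" using bswap_B[OF assms(1,2) True] by auto
      then show ?thesis using assms(3) by (auto simp: bswap_A)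
    next
      case False
      then show ?thesis using \<open>v \<notin> A\<close> vW by (simp add: bswap_out)
    qed
  qed
qed

lemma aut_id: "aut W R id"
  unfolding aut_def by simp

lemma step_good:
  assumes RW: "R \<subseteq> W \<times> W" and E: "euclidean W R" and sub: "W' \<subseteq> W"
    and tv: "TVcrit W R W' q" and q: "q > 0" and ne: "W \<noteq> {}"
    and sp: "\<forall>w\<in>W'. (\<exists>v. (w,v)\<in>R) \<longrightarrow> (\<exists>v\<in>W'. (w,v)\<in>R)"
  shows "W' \<noteq> {} \<and> res R W' \<subseteq> W' \<times> W' \<and> euclidean W' (res R W')
     \<and> (mvalid W R \<phi> \<longrightarrow> mvalid W' (res R W') \<phi>)
     \<and> (\<forall>A. sentence A \<and> qd A \<le> q \<longrightarrow> (fo_valid W' (res R W') A \<longleftrightarrow> fo_valid W R A))"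
proof (intro conjI allI impI)
  obtain d where "d \<in> W" using ne by blast
  moreover have "{} \<subseteq> W' \<and> finite {} \<and> card {} < q" using q by simp
  ultimately obtain \<sigma> where "\<sigma> d \<in> W'" using tv[unfolded TVcrit_def, rule_format, of "{}" d] by blast
  then show "W' \<noteq> {}" by blast
  then have ne': "W' \<noteq> {}" .
  show "res R W' \<subseteq> W' \<times> W'" by (auto simp: res_def)
  show "euclidean W' (res R W')" by (rule euclid_res[OF E])
  show "mvalid W' (res R W') \<phi>" if "mvalid W R \<phi>"
    by (rule sub_valid[OF RW E sub sp that])
  fix A assume "sentence A \<and> qd A \<le> q"
  then show "fo_valid W' (res R W') A = fo_valid W R A"
    using tv_valid[OF RW sub tv ne'] by blast
qed

context efr
begin

definition cls :: "'w set \<Rightarrow> 'w set" where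
  "cls T = {v\<in>W. (v,v) \<notin> R \<and> R``{v} = T}"

definition W1 :: "nat \<Rightarrow> 'w set" where
  "W1 q = {w\<in>W. (w,w) \<in> R \<or> w \<in> cap q (cls (R``{w}))}"

lemma W1_sub: "W1 q \<subseteq> W" unfolding W1_def by auto

lemma W1_sp: "\<forall>w\<in>W1 q. \<forall>v. (w,v)\<in>R \<longrightarrow> v \<in> W1 q"
proof (intro ballI allI impI)
  fix w v assume "w \<in> W1 q" "(w,v) \<in> R"
  then have "v \<in> W" "(v,v) \<in> R" using RW refl_succ by auto
  then show "v \<in> W1 q" unfolding W1_def by simp
qed

lemma unseen: "(d,d) \<notin> R \<Longrightarrow> (a,d) \<notin> R"
  using refl_succ[of a d] by auto

lemma W1_tv:
  assumes q: "q > 0"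
  shows "TVcrit W R (W1 q) q"
  unfolding TVcrit_def
proof (intro allI impI ballI)
  fix S d assume S: "S \<subseteq> W1 q \<and> finite S \<and> card S < q" and d: "d \<in> W"
  show "\<exists>\<sigma>. aut W R \<sigma> \<and> (\<forall>s\<in>S. \<sigma> s = s) \<and> \<sigma> d \<in> W1 q"
  proof (cases "d \<in> W1 q")
    case True then show ?thesis using aut_id by (metis id_apply)
  next
    case False
    define T where "T = R``{d}"
    have dirr: "(d,d) \<notin> R" and dnc: "d \<notin> cap q (cls T)" using False d unfolding W1_def T_def by auto
    have dc: "d \<in> cls T" using d dirr unfolding cls_def T_def by auto
    have fS: "finite S" "card S < q" using S by auto
    obtain r where r: "r \<in> cap q (cls T)" "r \<notin> S" using cap_avoid[OF dc dnc fS] by blast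
    have rc: "r \<in> cls T" by (rule subsetD[OF cap_props(1) r(1)])
    then have rW: "r \<in> W" and rirr: "(r,r) \<notin> R" and rT: "R``{r} = T" unfolding cls_def by auto
    have rd: "r \<noteq> d" using r dnc by auto
    define \<sigma> where "\<sigma> v = (if v = d then r else if v = r then d else v)" for v
    have inv: "\<forall>v\<in>W. \<sigma> v \<in> W \<and> \<sigma> (\<sigma> v) = v"
    proof
      fix v assume "v \<in> W" then show "\<sigma> v \<in> W \<and> \<sigma> (\<sigma> v) = v" using rW d rd by (simp add: \<sigma>_def)
    qed
    have pres: "(\<sigma> a, \<sigma> b) \<in> R" if "a \<in> W" "b \<in> W" "(a,b) \<in> R" for a b
    proof -
      have bd: "b \<noteq> d" "b \<noteq> r" using that(3) unseen[OF dirr, of a] unseen[OF rirr, of a] by auto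
      then have sb: "\<sigma> b = b" unfolding \<sigma>_def by simp
      have iff: "(d,b) \<in> R \<longleftrightarrow> (r,b) \<in> R" using rT unfolding T_def by blast
      show ?thesis
      proof (cases "a = d")
        case True
        then have "\<sigma> a = r" by (simp add: \<sigma>_def)
        then show ?thesis using iff True that(3) sb by simp
      next
        case False
        show ?thesis
        proof (cases "a = r")
          case True
          then have "\<sigma> a = d" using rd by (simp add: \<sigma>_def)
          then show ?thesis using iff True that(3) sb by simp
        next
          case False
          then have "\<sigma> a = a" using \<open>a \<noteq> d\<close> by (simp add: \<sigma>_def)
          then show ?thesis using that(3) sb by simp
        qed
      qed
    qed
    have "aut W R \<sigma>" by (rule aut_inv[OF inv pres])
    moreover have "\<forall>s\<in>S. \<sigma> s = s" using S False r(2) unfolding \<sigma>_def by auto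
    moreover have "\<sigma> d \<in> W1 q" using rW r rT unfolding \<sigma>_def W1_def T_def by auto
    ultimately show ?thesis by blast
  qed
qed

lemma W1_spw: "\<forall>w\<in>W1 q. (\<exists>v. (w,v)\<in>R) \<longrightarrow> (\<exists>v\<in>W1 q. (w,v)\<in>R)"
  using W1_sp by blast

lemma W1_succ: assumes "w \<in> W1 q" shows "res R (W1 q) `` {w} = R``{w}"
proof
  show "res R (W1 q) `` {w} \<subseteq> R``{w}" by (auto simp: res_def)
  show "R``{w} \<subseteq> res R (W1 q) `` {w}"
  proof
    fix v assume "v \<in> R``{w}"
    then have "(w,v) \<in> R" by simp
    moreover then have "v \<in> W1 q" using W1_sp assms by blast
    ultimately show "v \<in> res R (W1 q) `` {w}" using assms by (simp add: res_def)
  qed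
qed

lemma W1_capped: "{v\<in>W1 q. (v,v) \<notin> res R (W1 q) \<and> res R (W1 q)``{v} = T} \<subseteq> cap q (cls T)"
proof
  fix v assume "v \<in> {v\<in>W1 q. (v,v) \<notin> res R (W1 q) \<and> res R (W1 q)``{v} = T}"
  then have v: "v \<in> W1 q" "(v,v) \<notin> res R (W1 q)" "res R (W1 q)``{v} = T" by auto
  then have v2: "(v,v) \<notin> R" "R``{v} = T" using W1_succ[OF v(1)] by (auto simp: res_def)
  then show "v \<in> cap q (cls T)" using v(1) unfolding W1_def by auto
qed

end



locale efrc = efrv W R \<phi> kk for W :: "'w set" and R \<phi> kk +
  fixes q :: nat
  assumes q3: "q \<ge> 3" and capped: "\<And>T. finite (cls T) \<and> card (cls T) \<le> q"
begin

definition bigc :: "'w \<Rightarrow> bool" where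
  "bigc x \<longleftrightarrow> (x,x) \<in> R \<and> \<not> (finite (R``{x}) \<and> card (R``{x}) \<le> kk)"

definition single :: "'w \<Rightarrow> 'w set" where "single x = cls {x}"
definition cobar :: "'w \<Rightarrow> 'w set" where "cobar x = cls (R``{x} - {x})"
definition blk :: "'w \<Rightarrow> 'w set" where "blk x = insert x (single x \<union> cobar x)"
definition col :: "'w \<Rightarrow> nat \<times> nat" where "col x = (card (single x), card (cobar x))"
definition sameC :: "'w \<Rightarrow> 'w set" where
  "sameC y = {x\<in>W. (x,x) \<in> R \<and> R``{x} = R``{y} \<and> col x = col y}"
definition keepB :: "'w \<Rightarrow> 'w set" where "keepB y = cap q (sameC y)"
definition removed :: "'w \<Rightarrow> bool" where
  "removed w \<longleftrightarrow> (\<exists>y. bigc y \<and> y \<notin> keepB y \<and> w \<in> blk y)"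
definition W2 :: "'w set" where "W2 = {w\<in>W. \<not> removed w}"

lemma cls_irr: "v \<in> cls T \<Longrightarrow> (v,v) \<notin> R" by (simp add: cls_def)
lemma cls_W: "v \<in> cls T \<Longrightarrow> v \<in> W" by (simp add: cls_def)
lemma cls_succ: "v \<in> cls T \<Longrightarrow> R``{v} = T" by (simp add: cls_def)
lemma cls_I: "v \<in> W \<Longrightarrow> (v,v) \<notin> R \<Longrightarrow> R``{v} = T \<Longrightarrow> v \<in> cls T" by (simp add: cls_def)

lemma cl_eq: assumes "(x,x) \<in> R" "(x,v) \<in> R" shows "R``{v} = R``{x}"
proof
  show "R``{v} \<subseteq> R``{x}" using clus2[OF assms(1) assms(2)] by blast
  show "R``{x} \<subseteq> R``{v}" using clus[OF assms(2)] by blast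
qed

lemma blk_refl: "w \<in> blk y \<Longrightarrow> (w,w) \<in> R \<Longrightarrow> w = y"
  unfolding blk_def single_def cobar_def using cls_irr by blast

lemma bigc_not_sub: "bigc x \<Longrightarrow> finite F \<Longrightarrow> card F \<le> kk \<Longrightarrow> \<not> R``{x} \<subseteq> F"
  unfolding bigc_def by (meson card_mono finite_subset le_trans)

lemma bigc_other: assumes "bigc x" obtains v where "(x,v) \<in> R" "v \<noteq> z"
proof -
  have "\<not> R``{x} \<subseteq> {z}" using bigc_not_sub[OF assms, of "{z}"] kk4 by simp
  then show ?thesis using that by blast
qed

lemma x_in_C: "(x,x) \<in> R \<Longrightarrow> x \<in> R``{x}" by simp

lemma blk_disj:
  assumes bx: "bigc x" and by': "bigc y" and wx: "w \<in> blk x" and wy: "w \<in> blk y"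
  shows "x = y"
proof (rule ccontr)
  assume xy: "x \<noteq> y"
  have xx: "(x,x) \<in> R" and yy: "(y,y) \<in> R" using bx by' by (auto simp: bigc_def)
  have wx': "w \<noteq> x" using blk_refl[OF wy] xx xy by blast
  have wy': "w \<noteq> y" using blk_refl[OF wx] yy xy by blast
  have sx: "R``{w} = {x} \<or> R``{w} = R``{x} - {x}"
    using wx wx' unfolding blk_def single_def cobar_def by (auto dest: cls_succ)
  have sy: "R``{w} = {y} \<or> R``{w} = R``{y} - {y}"
    using wy wy' unfolding blk_def single_def cobar_def by (auto dest: cls_succ)
  show False
  proof (cases "R``{w} = {x}")
    case True
    show False
    proof (cases "R``{w} = {y}")
      case True then show False using \<open>R``{w} = {x}\<close> xy by simp
    next
      case False
      then have "R``{y} - {y} = {x}" using sy True by simp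
      then have "R``{y} \<subseteq> {x,y}" by blast
      moreover have "card {x,y} \<le> kk" using kk4 by (cases "x = y") auto
      ultimately show False using bigc_not_sub[OF by', of "{x,y}"] by auto
    qed
  next
    case False
    then have ex: "R``{w} = R``{x} - {x}" using sx by simp
    show False
    proof (cases "R``{w} = {y}")
      case True
      then have "R``{x} - {x} = {y}" using ex by simp
      then have "R``{x} \<subseteq> {y,x}" by blast
      moreover have "card {y,x} \<le> kk" using kk4 by (cases "x = y") auto
      ultimately show False using bigc_not_sub[OF bx, of "{y,x}"] by auto
    next
      case False
      then have ey: "R``{w} = R``{y} - {y}" using sy by simp
      obtain v where v: "(x,v) \<in> R" "v \<noteq> x" using bigc_other[OF bx] by blast
      then have "v \<in> R``{w}" using ex by simp
      then have "(y,v) \<in> R" using ey by simp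
      then have "R``{y} = R``{x}" using cl_eq[OF yy] cl_eq[OF xx v(1)] by simp
      then have "R``{x} - {x} = R``{x} - {y}" using ex ey by simp
      moreover have "y \<in> R``{x}" using \<open>R``{y} = R``{x}\<close> yy by blast
      ultimately show False using xy by blast
    qed
  qed
qed

definition swp :: "'w \<Rightarrow> 'w \<Rightarrow> ('w \<Rightarrow> 'w) \<Rightarrow> bool" where
  "swp x y \<sigma> \<longleftrightarrow> bigc x \<and> bigc y \<and> R``{y} = R``{x} \<and> x \<noteq> y \<and> \<sigma> x = y \<and> \<sigma> y = x
    \<and> (\<forall>v\<in>single x. \<sigma> v \<in> single y) \<and> (\<forall>v\<in>single y. \<sigma> v \<in> single x)
    \<and> (\<forall>v\<in>cobar x. \<sigma> v \<in> cobar y) \<and> (\<forall>v\<in>cobar y. \<sigma> v \<in> cobar x)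
    \<and> (\<forall>v. v \<notin> blk x \<and> v \<notin> blk y \<longrightarrow> \<sigma> v = v)"

lemma swp_sym: "swp x y \<sigma> \<Longrightarrow> swp y x \<sigma>"
  unfolding swp_def by metis

lemma swp_refl:
  assumes "swp x y \<sigma>" "(b,b) \<in> R"
  shows "\<sigma> b = (if b = x then y else if b = y then x else b)"
proof -
  have "b \<notin> blk x" if "b \<noteq> x" using blk_refl assms(2) that by blast
  moreover have "b \<notin> blk y" if "b \<noteq> y" using blk_refl assms(2) that by blast
  ultimately show ?thesis using assms(1) unfolding swp_def by auto
qed

lemma pres_half:
  assumes sw: "swp x y \<sigma>" and ab: "(a,b) \<in> R" and ay: "a \<notin> blk y"
  shows "(\<sigma> a, \<sigma> b) \<in> R"
proof -
  define C where "C = R``{x}"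
  have bx: "bigc x" and by': "bigc y" and Cy: "R``{y} = C" and xy: "x \<noteq> y"
    and sx: "\<sigma> x = y" and sy: "\<sigma> y = x"
    and s1: "\<forall>v\<in>single x. \<sigma> v \<in> single y" and s3: "\<forall>v\<in>cobar x. \<sigma> v \<in> cobar y"
    and sout: "\<forall>v. v \<notin> blk x \<and> v \<notin> blk y \<longrightarrow> \<sigma> v = v"
    using sw unfolding swp_def C_def by auto
  have xx: "(x,x) \<in> R" and yy: "(y,y) \<in> R" using bx by' by (auto simp: bigc_def)
  have xC: "x \<in> C" and yC: "y \<in> C" using xx yy Cy by (auto simp: C_def)
  have CR: "(u,v) \<in> R" if "u \<in> C" "v \<in> C" for u v using that clus[of x u v] by (simp add: C_def)
  have bb: "(b,b) \<in> R" using refl_succ[OF ab] .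
  have sb: "\<sigma> b = (if b = x then y else if b = y then x else b)" using swp_refl[OF sw bb] .
  show ?thesis
  proof (cases "a \<in> blk x")
    case True
    then consider "a = x" | "a \<in> single x" | "a \<in> cobar x" unfolding blk_def by blast
    then show ?thesis
    proof cases
      case 1
      then have bC: "b \<in> C" using ab by (simp add: C_def)
      have "\<sigma> b \<in> C" using sb bC xC yC by auto
      then show ?thesis using 1 sx yC CR by simp
    next
      case 2
      then have "R``{a} = {x}" by (simp add: single_def cls_succ)
      then have "b = x" using ab by blast
      moreover have "\<sigma> a \<in> single y" using s1 2 by blast
      then have "R``{\<sigma> a} = {y}" by (simp add: single_def cls_succ)
      ultimately show ?thesis using sx by auto
    next
      case 3
      then have "R``{a} = C - {x}" by (simp add: cobar_def cls_succ C_def)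
      then have bC: "b \<in> C" "b \<noteq> x" using ab by auto
      moreover have "\<sigma> a \<in> cobar y" using s3 3 by blast
      then have "R``{\<sigma> a} = C - {y}" using Cy by (simp add: cobar_def cls_succ)
      moreover have "\<sigma> b \<in> C - {y}" using sb bC xC xy by auto
      ultimately show ?thesis by auto
    qed
  next
    case False
    then have sa: "\<sigma> a = a" using sout ay by blast
    show ?thesis
    proof (cases "b = x \<or> b = y")
      case False
      then show ?thesis using sa sb ab by simp
    next
      case True
      then have bC: "b \<in> C" and sbC: "\<sigma> b \<in> C" using xC yC sb xy by auto
      show ?thesis
      proof (cases "(a,a) \<in> R")
        case True
        have "R``{b} = R``{a}" using cl_eq[OF True ab] .
        moreover have "R``{b} = C" using \<open>b = x \<or> b = y\<close> Cy by (auto simp: C_def)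
        ultimately show ?thesis using sa sbC by simp
      next
        case airr: False
        have aW: "a \<in> W" using RW ab by auto
        show ?thesis
        proof (cases "b = x")
          case True
          have big: "\<not> (finite (R``{x}) \<and> card (R``{x}) \<le> kk)" using bx by (simp add: bigc_def)
          have "(a,x) \<in> R" using ab True by simp
          from classify[OF xx this big]
          consider z where "R``{a} = {z}" | "R``{a} = R``{x}" | z where "z \<in> R``{x}" "R``{a} = R``{x} - {z}"
            by blast
          then show ?thesis
          proof cases
            case (1 z)
            have "x \<in> R``{a}" using \<open>(a,x) \<in> R\<close> by simp
            then have "z = x" using 1 by simp
            then have "a \<in> single x" using 1 aW airr by (simp add: single_def cls_I)
            then show ?thesis using False unfolding blk_def by blast
          next
            case 2
            have "\<sigma> b \<in> R``{a}" using 2 sbC by (simp add: C_def)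
            then show ?thesis using sa by simp
          next
            case (3 z)
            have zx: "z \<noteq> x" using 3 \<open>(a,x) \<in> R\<close> by blast
            have zy: "z \<noteq> y"
            proof
              assume "z = y"
              then have "a \<in> cobar y" using 3 aW airr Cy by (simp add: cobar_def cls_I C_def)
              then show False using ay unfolding blk_def by blast
            qed
            have "\<sigma> b = y" using sb True by simp
            moreover have "y \<in> R``{x} - {z}" using yC zy by (simp add: C_def)
            then have "y \<in> R``{a}" using 3 by simp
            ultimately show ?thesis using sa by simp
          qed
        next
          case False
          then have bY: "b = y" using \<open>b = x \<or> b = y\<close> by simp
          have big: "\<not> (finite (R``{y}) \<and> card (R``{y}) \<le> kk)" using by' by (simp add: bigc_def)
          have "(a,y) \<in> R" using ab bY by simp
          from classify[OF yy this big]
          consider z where "R``{a} = {z}" | "R``{a} = R``{y}" | z where "z \<in> R``{y}" "R``{a} = R``{y} - {z}"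
            by blast
          then show ?thesis
          proof cases
            case (1 z)
            have "y \<in> R``{a}" using \<open>(a,y) \<in> R\<close> by simp
            then have "z = y" using 1 by simp
            then have "a \<in> single y" using 1 aW airr by (simp add: single_def cls_I)
            then show ?thesis using ay unfolding blk_def by blast
          next
            case 2
            have "\<sigma> b \<in> R``{a}" using 2 sbC Cy by (simp add: C_def)
            then show ?thesis using sa by simp
          next
            case (3 z)
            have zy: "z \<noteq> y" using 3 \<open>(a,y) \<in> R\<close> by blast
            have zx: "z \<noteq> x"
            proof
              assume "z = x"
              then have "a \<in> cobar x" using 3 aW airr Cy by (simp add: cobar_def cls_I C_def)
              then show False using \<open>a \<notin> blk x\<close> unfolding blk_def by blast
            qed
            have "\<sigma> b = x" using sb bY xy by simp
            moreover have "x \<in> R``{y} - {z}" using xC zx Cy by (simp add: C_def)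
            then have "x \<in> R``{a}" using 3 by simp
            ultimately show ?thesis using sa by simp
          qed
        qed
      qed
    qed
  qed
qed

lemma pres_full:
  assumes sw: "swp x y \<sigma>" and ab: "(a,b) \<in> R"
  shows "(\<sigma> a, \<sigma> b) \<in> R"
proof (cases "a \<in> blk y")
  case False then show ?thesis using pres_half[OF sw ab] by blast
next
  case True
  have "a \<notin> blk x"
  proof
    assume "a \<in> blk x"
    then have "x = y" using blk_disj True sw unfolding swp_def by blast
    then show False using sw unfolding swp_def by blast
  qed
  then show ?thesis using pres_half[OF swp_sym[OF sw] ab] by blast
qed

end



context efrc
begin

lemma bigc_refl: "bigc x \<Longrightarrow> (x,x) \<in> R" by (simp add: bigc_def)
lemma refl_W: "(x,x) \<in> R \<Longrightarrow> x \<in> W" using RW by auto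

lemma sameC_eq: "x \<in> sameC y \<Longrightarrow> sameC x = sameC y"
  unfolding sameC_def by auto

lemma keepB_eq: "x \<in> sameC y \<Longrightarrow> keepB x = keepB y"
  unfolding keepB_def using sameC_eq by simp

lemma sameC_self: "(y,y) \<in> R \<Longrightarrow> y \<in> sameC y"
  unfolding sameC_def using refl_W by simp

lemma sameC_big: "bigc y \<Longrightarrow> x \<in> sameC y \<Longrightarrow> bigc x \<and> R``{x} = R``{y}"
  unfolding sameC_def bigc_def by auto

lemma keepB_sub: "keepB y \<subseteq> sameC y" unfolding keepB_def by (rule cap_props(1))

lemma blk_W: "x \<in> W \<Longrightarrow> blk x \<subseteq> W"
  unfolding blk_def single_def cobar_def using cls_W by blast

lemma kept_W2:
  assumes by': "bigc y" and x: "x \<in> keepB y"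
  shows "blk x \<subseteq> W2"
proof
  fix w assume w: "w \<in> blk x"
  have xs: "x \<in> sameC y" using x keepB_sub by blast
  have bx: "bigc x" using sameC_big[OF by' xs] by blast
  have xW: "x \<in> W" using xs unfolding sameC_def by blast
  have "\<not> removed w"
  proof
    assume "removed w"
    then obtain y' where y': "bigc y'" "y' \<notin> keepB y'" "w \<in> blk y'" unfolding removed_def by blast
    have "x = y'" using blk_disj[OF bx y'(1) w y'(3)] .
    then show False using y'(2) x keepB_eq[OF xs] by simp
  qed
  then show "w \<in> W2" using w blk_W[OF xW] unfolding W2_def by blast
qed

lemma single_cobar_disj: "single x \<inter> cobar x = {}"
proof -
  have "v \<notin> cobar x" if "v \<in> single x" for v
  proof
    assume "v \<in> cobar x"
    then have "R``{v} = R``{x} - {x}" by (simp add: cobar_def cls_succ)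
    moreover have "R``{v} = {x}" using that by (simp add: single_def cls_succ)
    ultimately show False by blast
  qed
  then show ?thesis by blast
qed

lemma refl_notin: "(x,x) \<in> R \<Longrightarrow> x \<notin> single y \<and> x \<notin> cobar y"
  unfolding single_def cobar_def using cls_irr by blast

lemma blk_split: "blk x = ({x} \<union> single x) \<union> cobar x"
  unfolding blk_def by blast

lemma mk_swap:
  assumes by': "bigc y" and xs: "x \<in> sameC y" and xy: "x \<noteq> y"
  shows "\<exists>\<sigma>. swp x y \<sigma> \<and> (\<forall>v\<in>W. \<sigma> v \<in> W \<and> \<sigma> (\<sigma> v) = v) \<and> (\<forall>v\<in>blk y. \<sigma> v \<in> blk x)"
proof -
  have bx: "bigc x" and Cxy: "R``{x} = R``{y}" using sameC_big[OF by' xs] by auto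
  have colxy: "col x = col y" and xW: "x \<in> W" using xs unfolding sameC_def by auto
  have xx: "(x,x) \<in> R" and yy: "(y,y) \<in> R" using bx by' by (auto simp: bigc_def)
  have yW: "y \<in> W" using refl_W[OF yy] .
  have c1: "card (single x) = card (single y)" and c2: "card (cobar x) = card (cobar y)"
    using colxy by (auto simp: col_def)
  have f: "finite (single x)" "finite (single y)" "finite (cobar x)" "finite (cobar y)"
    using capped[of "{x}"] capped[of "{y}"] capped[of "R``{x} - {x}"] capped[of "R``{y} - {y}"]
    by (auto simp: single_def cobar_def)
  obtain h1 where h1: "bij_betw h1 (single x) (single y)" using finite_same_card_bij[OF f(1,2) c1] by blast
  obtain h2 where h2: "bij_betw h2 (cobar x) (cobar y)" using finite_same_card_bij[OF f(3,4) c2] by blast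
  define h where "h v = (if v = x then y else if v \<in> single x then h1 v else h2 v)" for v
  have b0: "bij_betw h {x} {y}" by (simp add: h_def bij_betw_def)
  have b1: "bij_betw h (single x) (single y)"
  proof (rule bij_betw_cong[THEN iffD1, OF _ h1])
    fix v assume "v \<in> single x"
    moreover have "x \<notin> single x" using refl_notin[OF xx, of x] by simp
    ultimately have "v \<noteq> x" by blast
    then show "h1 v = h v" using \<open>v \<in> single x\<close> unfolding h_def by simp
  qed
  have b2: "bij_betw h (cobar x) (cobar y)"
  proof (rule bij_betw_cong[THEN iffD1, OF _ h2])
    fix v assume v: "v \<in> cobar x"
    moreover have "x \<notin> cobar x" using refl_notin[OF xx, of x] by simp
    ultimately have "v \<noteq> x" by blast
    moreover have "v \<notin> single x" using v single_cobar_disj[of x] by blast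
    ultimately show "h2 v = h v" unfolding h_def by simp
  qed
  have b01: "bij_betw h ({x} \<union> single x) ({y} \<union> single y)"
    by (rule bij_betw_combine[OF b0 b1]) (use refl_notin[OF yy, of y] in blast)
  have bh: "bij_betw h (blk x) (blk y)" unfolding blk_split
    by (rule bij_betw_combine[OF b01 b2]) (use refl_notin[OF yy, of y] single_cobar_disj[of y] in blast)
  have disj: "blk x \<inter> blk y = {}" using blk_disj[OF bx by'] xy by blast
  have sub: "blk x \<union> blk y \<subseteq> W" using blk_W[OF xW] blk_W[OF yW] by blast
  define \<sigma> where "\<sigma> = bswap h (blk x) (blk y)"
  have xb: "x \<in> blk x" and yb: "y \<in> blk y" by (auto simp: blk_def)
  have A: "swp x y \<sigma>"
    unfolding swp_def
  proof (intro conjI ballI allI impI)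
    show "bigc x" "bigc y" "R``{y} = R``{x}" "x \<noteq> y" using bx by' Cxy xy by auto
    show "\<sigma> x = y" using xb by (simp add: \<sigma>_def bswap_A h_def)
    show "\<sigma> y = x" unfolding \<sigma>_def by (rule bswap_B_eq[OF bh disj xb]) (simp add: h_def)
  next
    fix v assume v: "v \<in> single x"
    have vb: "v \<in> blk x" unfolding blk_def using v by blast
    have "\<sigma> v = h v" unfolding \<sigma>_def by (rule bswap_A[OF vb])
    moreover have "h v \<in> single y" using bij_betw_apply[OF b1 v] .
    ultimately show "\<sigma> v \<in> single y" by simp
  next
    fix v assume v: "v \<in> single y"
    have "v \<in> h ` single x" using b1 v unfolding bij_betw_def by simp
    then obtain u where u: "u \<in> single x" "h u = v" by (rule imageE) simp
    have ub: "u \<in> blk x" unfolding blk_def using u(1) by blast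
    have "\<sigma> v = u" unfolding \<sigma>_def by (rule bswap_B_eq[OF bh disj ub u(2)])
    then show "\<sigma> v \<in> single x" using u by simp
  next
    fix v assume v: "v \<in> cobar x"
    have vb: "v \<in> blk x" unfolding blk_def using v by blast
    have "\<sigma> v = h v" unfolding \<sigma>_def by (rule bswap_A[OF vb])
    moreover have "h v \<in> cobar y" using bij_betw_apply[OF b2 v] .
    ultimately show "\<sigma> v \<in> cobar y" by simp
  next
    fix v assume v: "v \<in> cobar y"
    have "v \<in> h ` cobar x" using b2 v unfolding bij_betw_def by simp
    then obtain u where u: "u \<in> cobar x" "h u = v" by (rule imageE) simp
    have ub: "u \<in> blk x" unfolding blk_def using u(1) by blast
    have "\<sigma> v = u" unfolding \<sigma>_def by (rule bswap_B_eq[OF bh disj ub u(2)])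
    then show "\<sigma> v \<in> cobar x" using u by simp
  next
    fix v assume "v \<notin> blk x \<and> v \<notin> blk y"
    then show "\<sigma> v = v" by (simp add: \<sigma>_def bswap_out)
  qed
  have B: "\<forall>v\<in>W. \<sigma> v \<in> W \<and> \<sigma> (\<sigma> v) = v" unfolding \<sigma>_def by (rule bswap_inv[OF bh disj sub])
  have C: "\<forall>v\<in>blk y. \<sigma> v \<in> blk x"
  proof
    fix v assume "v \<in> blk y" then show "\<sigma> v \<in> blk x" unfolding \<sigma>_def by (rule bswap_B(1)[OF bh disj])
  qed
  have "swp x y \<sigma> \<and> (\<forall>v\<in>W. \<sigma> v \<in> W \<and> \<sigma> (\<sigma> v) = v) \<and> (\<forall>v\<in>blk y. \<sigma> v \<in> blk x)"
    by (rule conjI[OF A conjI[OF B C]])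
  then show ?thesis by (rule exI[of _ \<sigma>])
qed

lemma W2_sub: "W2 \<subseteq> W" unfolding W2_def by blast

lemma notW2: "d \<in> W \<Longrightarrow> d \<notin> W2 \<Longrightarrow> removed d" unfolding W2_def by blast

lemma W2_tv: "TVcrit W R W2 q"
  unfolding TVcrit_def
proof (intro allI impI ballI)
  fix S d assume S: "S \<subseteq> W2 \<and> finite S \<and> card S < q" and d: "d \<in> W"
  show "\<exists>\<sigma>. aut W R \<sigma> \<and> (\<forall>s\<in>S. \<sigma> s = s) \<and> \<sigma> d \<in> W2"
  proof (cases "d \<in> W2")
    case True then show ?thesis using aut_id by (metis id_apply)
  next
    case False
    then obtain y where y: "bigc y" "y \<notin> keepB y" "d \<in> blk y"
      using notW2[OF d False] unfolding removed_def by blast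
    have yy: "(y,y) \<in> R" using bigc_refl[OF y(1)] .
    have ys: "y \<in> sameC y" using sameC_self[OF yy] .
    have cq: "card (keepB y) = q" using cap_props(4)[where X="sameC y" and q=q] ys y(2)
      unfolding keepB_def by blast
    have fk: "finite (keepB y)" unfolding keepB_def by (rule cap_props(2))
    have "\<exists>x\<in>keepB y. blk x \<inter> S = {}"
    proof (rule ccontr)
      assume "\<not> ?thesis"
      then have ex: "\<forall>x\<in>keepB y. \<exists>s. s \<in> S \<and> s \<in> blk x" by blast
      define f where "f x = (SOME s. s \<in> S \<and> s \<in> blk x)" for x
      have fx: "f x \<in> S \<and> f x \<in> blk x" if "x \<in> keepB y" for x
        using someI_ex[OF ex[rule_format, OF that]] unfolding f_def .
      have "inj_on f (keepB y)"
      proof (rule inj_onI)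
        fix a b assume a: "a \<in> keepB y" and b: "b \<in> keepB y" and e: "f a = f b"
        have ba: "bigc a" using sameC_big[OF y(1)] a keepB_sub by blast
        have bb: "bigc b" using sameC_big[OF y(1)] b keepB_sub by blast
        show "a = b" using blk_disj[OF ba bb] fx[OF a] fx[OF b] e by metis
      qed
      moreover have "f ` keepB y \<subseteq> S" using fx by blast
      ultimately have "card (keepB y) \<le> card S" using card_inj_on_le S by blast
      then show False using cq S by simp
    qed
    then obtain x where x: "x \<in> keepB y" "blk x \<inter> S = {}" by blast
    have xs: "x \<in> sameC y" using x(1) keepB_sub by blast
    have xy: "x \<noteq> y" using x(1) y(2) by blast
    obtain \<sigma> where s: "swp x y \<sigma>" "\<forall>v\<in>W. \<sigma> v \<in> W \<and> \<sigma> (\<sigma> v) = v" "\<forall>v\<in>blk y. \<sigma> v \<in> blk x"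
      using mk_swap[OF y(1) xs xy] by blast
    have "aut W R \<sigma>" by (rule aut_inv[OF s(2)]) (rule pres_full[OF s(1)])
    moreover have "\<forall>s\<in>S. \<sigma> s = s"
    proof
      fix s assume sS: "s \<in> S"
      have "s \<notin> blk y"
      proof
        assume "s \<in> blk y"
        then have "removed s" using y unfolding removed_def by blast
        then show False using sS S unfolding W2_def by blast
      qed
      moreover have "s \<notin> blk x" using x(2) sS by blast
      ultimately show "\<sigma> s = s" using s(1) unfolding swp_def by blast
    qed
    moreover have "\<sigma> d \<in> W2" using s(3) y(3) kept_W2[OF y(1) x(1)] by blast
    ultimately show ?thesis by blast
  qed
qed

lemma big_kept_other:
  assumes bv: "bigc v"
  shows "\<exists>u. (v,u) \<in> R \<and> u \<noteq> z \<and> u \<in> W2"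
proof -
  obtain u0 where u0: "(v,u0) \<in> R" "u0 \<noteq> z" using bigc_other[OF bv] by blast
  have vv: "(v,v) \<in> R" using bigc_refl[OF bv] .
  have u0u0: "(u0,u0) \<in> R" using refl_succ[OF u0(1)] .
  show ?thesis
  proof (cases "u0 \<in> W2")
    case True then show ?thesis using u0 by blast
  next
    case False
    have u0W: "u0 \<in> W" using refl_W[OF u0u0] .
    obtain y where y: "bigc y" "y \<notin> keepB y" "u0 \<in> blk y"
      using notW2[OF u0W False] unfolding removed_def by blast
    have "u0 = y" using blk_refl[OF y(3) u0u0] .
    have ys: "y \<in> sameC y" using sameC_self[OF bigc_refl[OF y(1)]] .
    have cq: "card (keepB y) = q" using cap_props(4)[where X="sameC y" and q=q] ys y(2)
      unfolding keepB_def by blast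
    have "\<not> keepB y \<subseteq> {z}"
    proof
      assume "keepB y \<subseteq> {z}"
      then have "card (keepB y) \<le> card {z}" by (intro card_mono) auto
      then show False using cq q3 by simp
    qed
    then obtain x where x: "x \<in> keepB y" "x \<noteq> z" by blast
    have xs: "x \<in> sameC y" using x(1) keepB_sub by blast
    have xx: "(x,x) \<in> R" and Cx: "R``{x} = R``{y}" using xs unfolding sameC_def by auto
    have "R``{y} = R``{v}" using cl_eq[OF vv u0(1)] \<open>u0 = y\<close> by simp
    then have "(v,x) \<in> R" using Cx xx by blast
    moreover have "x \<in> W2" using kept_W2[OF y(1) x(1)] by (auto simp: blk_def)
    ultimately show ?thesis using x(2) by blast
  qed
qed

lemma W2_spw: "\<forall>w\<in>W2. (\<exists>v. (w,v)\<in>R) \<longrightarrow> (\<exists>v\<in>W2. (w,v)\<in>R)"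
proof (intro ballI impI)
  fix w assume w: "w \<in> W2" and "\<exists>v. (w,v)\<in>R"
  then obtain v where wv: "(w,v) \<in> R" by blast
  have vv: "(v,v) \<in> R" using refl_succ[OF wv] .
  have vW: "v \<in> W" using refl_W[OF vv] .
  have wW: "w \<in> W" using w W2_sub by blast
  show "\<exists>v\<in>W2. (w,v)\<in>R"
  proof (cases "(w,w) \<in> R")
    case True then show ?thesis using w by blast
  next
    case wirr: False
    show ?thesis
    proof (cases "bigc v")
      case False
      have "v \<in> W2"
      proof (rule ccontr)
        assume nv: "v \<notin> W2"
        obtain y where y: "bigc y" "y \<notin> keepB y" "v \<in> blk y"
          using notW2[OF vW nv] unfolding removed_def by blast
        then show False using blk_refl[OF y(3) vv] False by simp
      qed
      then show ?thesis using wv by blast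
    next
      case True
      have big: "\<not> (finite (R``{v}) \<and> card (R``{v}) \<le> kk)" using True by (simp add: bigc_def)
      from classify[OF vv wv big]
      consider z where "R``{w} = {z}" | "R``{w} = R``{v}" | z where "z \<in> R``{v}" "R``{w} = R``{v} - {z}"
        by blast
      then show ?thesis
      proof cases
        case (1 z)
        have "v \<in> R``{w}" using wv by simp
        then have zv: "z = v" using 1 by simp
        have "v \<in> W2"
        proof (rule ccontr)
          assume nv: "v \<notin> W2"
          obtain y where y: "bigc y" "y \<notin> keepB y" "v \<in> blk y"
            using notW2[OF vW nv] unfolding removed_def by blast
          have "v = y" using blk_refl[OF y(3) vv] .
          have "w \<in> single v" using 1 zv wW wirr by (simp add: single_def cls_I)
          then have "w \<in> blk y" using \<open>v = y\<close> by (simp add: blk_def)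
          then have "removed w" using y unfolding removed_def by blast
          then show False using w unfolding W2_def by blast
        qed
        then show ?thesis using wv by blast
      next
        case 2
        obtain u where "(v,u) \<in> R" "u \<in> W2" using big_kept_other[OF True] by blast
        then show ?thesis using 2 by blast
      next
        case (3 z)
        obtain u where u: "(v,u) \<in> R" "u \<noteq> z" "u \<in> W2" using big_kept_other[OF True] by blast
        then have "u \<in> R``{w}" using 3 by simp
        then show ?thesis using u by blast
      qed
    qed
  qed
qed

end



lemma card_UN_bound:
  assumes "finite I" "\<And>i. i \<in> I \<Longrightarrow> card (A i) \<le> b"
  shows "card (\<Union>i\<in>I. A i) \<le> card I * b"
proof -
  have "card (\<Union>i\<in>I. A i) \<le> (\<Sum>i\<in>I. card (A i))" by (rule card_UN_le[OF assms(1)])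
  also have "\<dots> \<le> of_nat (card I) * b" by (rule sum_bounded_above) (use assms(2) in auto)
  finally show ?thesis by simp
qed

lemma arith_small:
  fixes q kk :: nat
  assumes "q \<ge> 1"
  shows "kk + 2^kk * q \<le> (2 * q * (q * (q + 1)^2 + 1)) * 2^kk"
proof -
  have a: "kk \<le> 2^kk" using less_exp[of kk] by simp
  have "q + 1 \<le> 2 * q * (q * (q + 1)^2 + 1)"
  proof -
    have "q * (q+1)^2 + 1 \<ge> 1" by simp
    then have "2 * q * (q * (q + 1)^2 + 1) \<ge> 2 * q * 1" by (intro mult_le_mono2)
    then show ?thesis using assms by simp
  qed
  then have "(q+1) * 2^kk \<le> (2 * q * (q * (q + 1)^2 + 1)) * 2^kk" by (intro mult_le_mono1)
  moreover have "kk + 2^kk * q \<le> (q+1) * 2^kk" using a by (simp add: algebra_simps)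
  ultimately show ?thesis by linarith
qed

lemma arith_big:
  fixes q kk :: nat
  assumes "q \<ge> 1" "kk \<ge> 1"
  shows "(q+1)^2 * q + (q+1)^2 * q * (2*q) + q \<le> (2 * q * (q * (q + 1)^2 + 1)) * 2^kk"
proof -
  define M where "M = q * (q+1)^2"
  have e1: "(q+1)^2 * q = M" by (simp add: M_def)
  have e2: "M * (2*q) = 2 * (q * M)" by (simp add: algebra_simps)
  have e3: "2 * q * (q * (q + 1)^2 + 1) = 2 * (q * M) + 2 * q" by (simp add: M_def algebra_simps)
  have mq: "M \<le> q * M" using assms(1) by simp
  have k2: "2 \<le> (2::nat)^kk" using assms(2) by (metis power_one_right power_increasing_iff one_less_numeral_iff semiring_norm(76))
  have "(2 * (q * M) + 2 * q) * 2 \<le> (2 * (q * M) + 2 * q) * 2^kk" using k2 by (intro mult_le_mono2)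
  moreover have "(2 * (q * M) + 2 * q) * 2 = 4 * (q*M) + 4*q" by simp
  then have "M + 2 * (q * M) + q \<le> (2 * (q * M) + 2 * q) * 2" using mq by linarith
  ultimately show ?thesis unfolding e1 e3 using e2 by linarith
qed

context efrc
begin

definition key :: "'w \<Rightarrow> 'w set" where "key v = R``(R``{v})"
definition kap :: "'w \<Rightarrow> 'w set" where "kap v = (if R``{v} = {} then {v} else key v)"

lemma key_root: assumes "(r,c) \<in> R" shows "key r = R``{c}"
proof
  have cc: "(c,c) \<in> R" using refl_succ[OF assms] .
  show "key r \<subseteq> R``{c}"
  proof
    fix w assume "w \<in> key r"
    then obtain u where u: "(r,u) \<in> R" "(u,w) \<in> R" unfolding key_def by blast
    have "(c,u) \<in> R" using root_sub[OF assms u(1)] .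
    then have "R``{u} = R``{c}" using cl_eq[OF cc] by blast
    then show "w \<in> R``{c}" using u(2) by blast
  qed
  show "R``{c} \<subseteq> key r" using assms unfolding key_def by blast
qed

lemma key_refl: "(c,c) \<in> R \<Longrightarrow> key c = R``{c}" using key_root .

lemma kap_edge: assumes "(a,b) \<in> R" shows "kap a = kap b"
proof -
  have bb: "(b,b) \<in> R" using refl_succ[OF assms] .
  have "R``{a} \<noteq> {}" "R``{b} \<noteq> {}" using assms bb by auto
  moreover have "key a = R``{b}" using key_root[OF assms] .
  moreover have "key b = R``{b}" using key_refl[OF bb] .
  ultimately show ?thesis unfolding kap_def by simp
qed

definition fib2 :: "'w \<Rightarrow> 'w set" where "fib2 w = {v\<in>W2. kap v = kap w}"

lemma inW2_not_removed: "v \<in> W2 \<Longrightarrow> \<not> removed v" unfolding W2_def by blast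

lemma refl_in_W2_kept: assumes "x \<in> W2" "bigc x" shows "x \<in> keepB x"
proof (rule ccontr)
  assume "x \<notin> keepB x"
  then have "removed x" using assms(2) unfolding removed_def blk_def by blast
  then show False using assms(1) inW2_not_removed by blast
qed

lemma refl_W2: assumes "(z,z) \<in> R" "z \<in> W" "v \<in> blk z" "v \<in> W2" shows "z \<in> W2"
proof (rule ccontr)
  assume "z \<notin> W2"
  then obtain y where y: "bigc y" "y \<notin> keepB y" "z \<in> blk y"
    using notW2[OF assms(2)] unfolding removed_def by blast
  have "z = y" using blk_refl[OF y(3) assms(1)] .
  then have "removed v" using y assms(3) unfolding removed_def by blast
  then show False using assms(4) inW2_not_removed by blast
qed

lemma G_bound:
  assumes bc: "bigc c"
  shows "finite (R``{c} \<inter> W2) \<and> card (R``{c} \<inter> W2) \<le> (q+1)^2 * q"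
proof -
  define C where "C = R``{c}"
  define G where "G = C \<inter> W2"
  define P where "P = {0..q} \<times> {0..q}"
  define Gp where "Gp p = {x\<in>G. col x = p}" for p
  have cc: "(c,c) \<in> R" using bigc_refl[OF bc] .
  have xinfo: "(x,x) \<in> R \<and> R``{x} = C \<and> bigc x \<and> x \<in> W \<and> x \<in> keepB x" if "x \<in> G" for x
  proof -
    have cx: "(c,x) \<in> R" using that unfolding G_def C_def by blast
    have xx: "(x,x) \<in> R" using refl_succ[OF cx] .
    have Cx: "R``{x} = C" using cl_eq[OF cc cx] unfolding C_def .
    have bx: "bigc x" using bc xx Cx unfolding bigc_def C_def by simp
    have xW2: "x \<in> W2" using that unfolding G_def by blast
    show ?thesis using xx Cx bx refl_W[OF xx] refl_in_W2_kept[OF xW2 bx] by blast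
  qed
  have colP: "col x \<in> P" for x
    using capped[of "{x}"] capped[of "R``{x} - {x}"] unfolding col_def P_def single_def cobar_def by auto
  have GU: "G = (\<Union>p\<in>P. Gp p)" using colP unfolding Gp_def by blast
  have Gpb: "finite (Gp p) \<and> card (Gp p) \<le> q" for p
  proof (cases "Gp p = {}")
    case True then show ?thesis by simp
  next
    case False
    then obtain x0 where x0: "x0 \<in> Gp p" by blast
    have sub: "Gp p \<subseteq> keepB x0"
    proof
      fix x assume x: "x \<in> Gp p"
      have i: "(x,x) \<in> R \<and> R``{x} = C \<and> bigc x \<and> x \<in> W \<and> x \<in> keepB x" using xinfo x unfolding Gp_def by blast
      have i0: "R``{x0} = C" using xinfo x0 unfolding Gp_def by blast
      have "col x = col x0" using x x0 unfolding Gp_def by simp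
      then have "x \<in> sameC x0" using i i0 unfolding sameC_def by simp
      then have "keepB x = keepB x0" by (rule keepB_eq)
      then show "x \<in> keepB x0" using i by simp
    qed
    have "finite (keepB x0)" "card (keepB x0) \<le> q" unfolding keepB_def by (rule cap_props)+
    then show ?thesis using sub card_mono finite_subset by (metis le_trans)
  qed
  have fP: "finite P" "card P = (q+1)^2" unfolding P_def by (auto simp: power2_eq_square)
  have "card G \<le> card P * q" unfolding GU by (rule card_UN_bound[OF fP(1)]) (use Gpb in blast)
  moreover have "finite G" unfolding GU using fP(1) Gpb by blast
  ultimately show ?thesis using fP(2) unfolding G_def C_def by (simp add: mult.commute)
qed

lemma fib2_bound:
  assumes w: "w \<in> W2"
  shows "finite (fib2 w) \<and> card (fib2 w) \<le> (2 * q * (q * (q + 1)^2 + 1)) * 2^kk"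
proof (cases "R``{w} = {}")
  case True
  have "fib2 w \<subseteq> {w}"
  proof
    fix v assume v: "v \<in> fib2 w"
    then have kv: "kap v = {w}" using True unfolding fib2_def kap_def by simp
    show "v \<in> {w}"
    proof (cases "R``{v} = {}")
      case True then show ?thesis using kv unfolding kap_def by simp
    next
      case False
      then obtain c where vc: "(v,c) \<in> R" by blast
      then have "key v = R``{c}" by (rule key_root)
      moreover have "key v = {w}" using kv False unfolding kap_def by simp
      ultimately have "R``{c} = {w}" by simp
      then have "(c,w) \<in> R" by blast
      then have "(w,w) \<in> R" using refl_succ by blast
      then show ?thesis using \<open>R``{w} = {}\<close> by blast
    qed
  qed
  then have "finite (fib2 w)" "card (fib2 w) \<le> 1" using card_mono[of "{w}" "fib2 w"] finite_subset by auto
  moreover have "1 \<le> (2 * q * (q * (q + 1)^2 + 1)) * 2^kk" using q3 by simp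
  ultimately show ?thesis by linarith
next
  case False
  then obtain c where wc: "(w,c) \<in> R" by blast
  have cc: "(c,c) \<in> R" using refl_succ[OF wc] .
  define C where "C = R``{c}"
  have kw: "kap w = C" using False key_root[OF wc] unfolding kap_def C_def by simp
  have vinfo: "R``{v} \<noteq> {} \<and> R``{v} \<subseteq> C \<and> ((v,v) \<in> R \<longrightarrow> v \<in> C)" if "v \<in> fib2 w" for v
  proof -
    have kv: "kap v = C" using that kw unfolding fib2_def by simp
    have ne: "R``{v} \<noteq> {}"
    proof
      assume e: "R``{v} = {}"
      then have "{v} = C" using kv unfolding kap_def by simp
      then have "(c,v) \<in> R" unfolding C_def by blast
      then show False using refl_succ e by blast
    qed
    then obtain u where vu: "(v,u) \<in> R" by blast
    have kC: "R``{u} = C" using key_root[OF vu] kv ne unfolding kap_def by simp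
    have "R``{v} \<subseteq> C"
    proof
      fix t assume "t \<in> R``{v}"
      then have "(v,t) \<in> R" by simp
      have "(u,t) \<in> R" using root_sub[OF vu \<open>(v,t) \<in> R\<close>] .
      then show "t \<in> C" using kC by blast
    qed
    moreover have "v \<in> C" if "(v,v) \<in> R" using that \<open>R``{v} \<subseteq> C\<close> by blast
    ultimately show ?thesis using ne by blast
  qed
  show ?thesis
  proof (cases "bigc c")
    case False
    have fC: "finite C" "card C \<le> kk" using False cc unfolding bigc_def C_def by auto
    have sub: "fib2 w \<subseteq> C \<union> (\<Union>T\<in>Pow C. cls T)"
    proof
      fix v assume v: "v \<in> fib2 w"
      have vW: "v \<in> W" using v W2_sub unfolding fib2_def by blast
      show "v \<in> C \<union> (\<Union>T\<in>Pow C. cls T)"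
      proof (cases "(v,v) \<in> R")
        case True then show ?thesis using vinfo[OF v] by blast
      next
        case False
        then have "v \<in> cls (R``{v})" using vW by (simp add: cls_I)
        moreover have "R``{v} \<in> Pow C" using vinfo[OF v] by blast
        ultimately show ?thesis by blast
      qed
    qed
    have fU: "finite (\<Union>T\<in>Pow C. cls T)" using fC(1) capped by blast
    have cU: "card (\<Union>T\<in>Pow C. cls T) \<le> card (Pow C) * q"
      by (rule card_UN_bound) (use fC(1) capped in auto)
    have cP: "card (Pow C) \<le> 2^kk" using card_Pow[OF fC(1)] fC(2) by (simp add: power_increasing)
    have fin: "finite (C \<union> (\<Union>T\<in>Pow C. cls T))" using fC(1) fU by blast
    have "card (fib2 w) \<le> card (C \<union> (\<Union>T\<in>Pow C. cls T))" by (rule card_mono[OF fin sub])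
    also have "\<dots> \<le> card C + card (\<Union>T\<in>Pow C. cls T)" by (rule card_Un_le)
    also have "\<dots> \<le> kk + 2^kk * q"
    proof -
      have "card (Pow C) * q \<le> 2^kk * q" using cP by (rule mult_le_mono1)
      then show ?thesis using fC(2) cU by linarith
    qed
    also have "\<dots> \<le> (2 * q * (q * (q + 1)^2 + 1)) * 2^kk" using arith_small q3 by simp
    finally show ?thesis using finite_subset[OF sub fin] by blast
  next
    case True
    define G where "G = C \<inter> W2"
    have Gb: "finite G" "card G \<le> (q+1)^2 * q" using G_bound[OF True] unfolding G_def C_def by auto
    have sub: "fib2 w \<subseteq> G \<union> (\<Union>z\<in>G. single z \<union> cobar z) \<union> cls C"
    proof
      fix v assume v: "v \<in> fib2 w"
      have vW2: "v \<in> W2" using v unfolding fib2_def by blast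
      have vW: "v \<in> W" using vW2 W2_sub by blast
      show "v \<in> G \<union> (\<Union>z\<in>G. single z \<union> cobar z) \<union> cls C"
      proof (cases "(v,v) \<in> R")
        case True then show ?thesis using vinfo[OF v] vW2 unfolding G_def by blast
      next
        case virr: False
        obtain u where vu: "(v,u) \<in> R" using vinfo[OF v] by blast
        have uu: "(u,u) \<in> R" using refl_succ[OF vu] .
        have uC: "u \<in> C" using vinfo[OF v] vu by blast
        have Cu: "R``{u} = C" using cl_eq[OF cc] uC unfolding C_def by blast
        have big: "\<not> (finite (R``{u}) \<and> card (R``{u}) \<le> kk)" using True Cu unfolding bigc_def C_def by simp
        from classify[OF uu vu big]
        consider z where "R``{v} = {z}" | "R``{v} = R``{u}" | z where "z \<in> R``{u}" "R``{v} = R``{u} - {z}"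
          by blast
        then show ?thesis
        proof cases
          case (1 z)
          have vs: "v \<in> single z" using 1 vW virr by (simp add: single_def cls_I)
          have zC: "z \<in> C" using 1 vinfo[OF v] by blast
          have zz: "(z,z) \<in> R" using zC refl_succ unfolding C_def by blast
          have "z \<in> W2" by (rule refl_W2[OF zz refl_W[OF zz] _ vW2]) (use vs in \<open>simp add: blk_def\<close>)
          then show ?thesis using vs zC unfolding G_def by blast
        next
          case 2
          then have "v \<in> cls C" using vW virr Cu by (simp add: cls_I)
          then show ?thesis by blast
        next
          case (3 z)
          have zC: "z \<in> C" using 3 Cu by simp
          have zz: "(z,z) \<in> R" using zC refl_succ unfolding C_def by blast
          have Cz: "R``{z} = C" using cl_eq[OF cc] zC unfolding C_def by blast
          have vs: "v \<in> cobar z" using 3 vW virr Cu Cz by (simp add: cobar_def cls_I)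
          have "z \<in> W2" by (rule refl_W2[OF zz refl_W[OF zz] _ vW2]) (use vs in \<open>simp add: blk_def\<close>)
          then show ?thesis using vs zC unfolding G_def by blast
        qed
      qed
    qed
    have sc: "finite (single z \<union> cobar z) \<and> card (single z \<union> cobar z) \<le> 2 * q" for z
    proof -
      have "finite (single z)" "finite (cobar z)" "card (single z) \<le> q" "card (cobar z) \<le> q"
        using capped[of "{z}"] capped[of "R``{z} - {z}"] unfolding single_def cobar_def by auto
      then show ?thesis using card_Un_le[of "single z" "cobar z"] by auto
    qed
    have fU: "finite (\<Union>z\<in>G. single z \<union> cobar z)" using Gb(1) sc by blast
    have cU: "card (\<Union>z\<in>G. single z \<union> cobar z) \<le> card G * (2 * q)"
      by (rule card_UN_bound[OF Gb(1)]) (use sc in blast)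
    have fcl: "finite (cls C)" "card (cls C) \<le> q" using capped by auto
    have fin: "finite (G \<union> (\<Union>z\<in>G. single z \<union> cobar z) \<union> cls C)" using Gb(1) fU fcl by blast
    have "card (fib2 w) \<le> card (G \<union> (\<Union>z\<in>G. single z \<union> cobar z) \<union> cls C)" by (rule card_mono[OF fin sub])
    also have "\<dots> \<le> card G + card (\<Union>z\<in>G. single z \<union> cobar z) + card (cls C)"
      using card_Un_le[of "G \<union> (\<Union>z\<in>G. single z \<union> cobar z)" "cls C"]
        card_Un_le[of G "\<Union>z\<in>G. single z \<union> cobar z"] by linarith
    also have "\<dots> \<le> (q+1)^2 * q + (q+1)^2 * q * (2*q) + q"
    proof -
      have "card G * (2 * q) \<le> (q+1)^2 * q * (2*q)" using Gb(2) by (rule mult_le_mono1)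
      then show ?thesis using Gb(2) cU fcl(2) by linarith
    qed
    also have "\<dots> \<le> (2 * q * (q * (q + 1)^2 + 1)) * 2^kk" using arith_big q3 kk4 by simp
    finally show ?thesis using finite_subset[OF sub fin] by blast
  qed
qed

end



locale efk =
  fixes W :: "'w set" and R :: "('w \<times> 'w) set" and \<kappa> :: "'w \<Rightarrow> 'k" and N :: nat
  assumes RW: "R \<subseteq> W \<times> W"
    and kedge: "\<And>a b. (a,b) \<in> R \<Longrightarrow> \<kappa> a = \<kappa> b"
    and fibb: "\<And>w. w \<in> W \<Longrightarrow> finite {v\<in>W. \<kappa> v = \<kappa> w} \<and> card {v\<in>W. \<kappa> v = \<kappa> w} \<le> N"
begin

definition fib :: "'w \<Rightarrow> 'w set" where "fib w = {v\<in>W. \<kappa> v = \<kappa> w}"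
definition enum :: "'w set \<Rightarrow> 'w \<Rightarrow> nat" where "enum X = (SOME e. bij_betw e X {0..<card X})"
definition code :: "'w set \<Rightarrow> nat \<times> (nat \<times> nat) set" where
  "code X = (card X, (\<lambda>(a,b). (enum X a, enum X b)) ` (R \<inter> X \<times> X))"
definition Fibs :: "'w set set" where "Fibs = fib ` W"
definition Codes :: "(nat \<times> (nat \<times> nat) set) set" where
  "Codes = {0..N} \<times> Pow ({0..<N} \<times> {0..<N})"
definition keepC :: "nat \<Rightarrow> nat \<times> (nat \<times> nat) set \<Rightarrow> 'w set set" where
  "keepC q c = cap q {X\<in>Fibs. code X = c}"
definition W3 :: "nat \<Rightarrow> 'w set" where "W3 q = \<Union>{X\<in>Fibs. X \<in> keepC q (code X)}"
definition iso :: "'w set \<Rightarrow> 'w set \<Rightarrow> 'w \<Rightarrow> 'w" where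
  "iso X Y = inv_into Y (enum Y) \<circ> enum X"

lemma fib_fin: assumes "X \<in> Fibs" shows "finite X \<and> card X \<le> N"
proof -
  obtain w where w: "w \<in> W" "X = fib w" using assms unfolding Fibs_def by blast
  show ?thesis using fibb[OF w(1)] w(2) unfolding fib_def by simp
qed

lemma fib_sub: "X \<in> Fibs \<Longrightarrow> X \<subseteq> W" unfolding Fibs_def fib_def by blast

lemma fib_self: "w \<in> W \<Longrightarrow> w \<in> fib w" unfolding fib_def by simp

lemma fib_disj: assumes "X \<in> Fibs" "Y \<in> Fibs" "v \<in> X" "v \<in> Y" shows "X = Y"
proof -
  obtain w1 where w1: "w1 \<in> W" "X = fib w1" using assms(1) unfolding Fibs_def by blast
  obtain w2 where w2: "w2 \<in> W" "Y = fib w2" using assms(2) unfolding Fibs_def by blast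
  have "\<kappa> w1 = \<kappa> w2" using assms(3,4) w1 w2 unfolding fib_def by simp
  then show ?thesis using w1(2) w2(2) unfolding fib_def by simp
qed

lemma fib_edge: assumes "X \<in> Fibs" "a \<in> X" "(a,b) \<in> R" shows "b \<in> X"
proof -
  obtain w where w: "w \<in> W" "X = fib w" using assms(1) unfolding Fibs_def by blast
  have "b \<in> W" using assms(3) RW by auto
  moreover have "\<kappa> b = \<kappa> a" using kedge[OF assms(3)] by simp
  ultimately show ?thesis using assms(2) w(2) unfolding fib_def by simp
qed

lemma enum_bij: assumes "finite X" shows "bij_betw (enum X) X {0..<card X}"
  unfolding enum_def by (rule someI_ex[OF ex_bij_betw_finite_nat[OF assms]])

lemma code_in: assumes "X \<in> Fibs" shows "code X \<in> Codes"
proof -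
  have f: "finite X" "card X \<le> N" using fib_fin[OF assms] by auto
  have "enum X a < N" if "a \<in> X" for a
    using bij_betw_apply[OF enum_bij[OF f(1)] that] f(2) by auto
  then show ?thesis unfolding code_def Codes_def using f(2) by auto
qed

lemma iso_bij:
  assumes X: "X \<in> Fibs" and Y: "Y \<in> Fibs" and c: "code X = code Y"
  shows "bij_betw (iso X Y) X Y"
proof -
  have fX: "finite X" and fY: "finite Y" using fib_fin X Y by auto
  have cc: "card X = card Y" using c unfolding code_def by simp
  have b1: "bij_betw (enum X) X {0..<card Y}" using enum_bij[OF fX] cc by simp
  have b2: "bij_betw (inv_into Y (enum Y)) {0..<card Y} Y" using bij_betw_inv_into[OF enum_bij[OF fY]] .
  show ?thesis unfolding iso_def by (rule bij_betw_trans[OF b1 b2])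
qed

lemma iso_pres:
  assumes X: "X \<in> Fibs" and Y: "Y \<in> Fibs" and c: "code X = code Y"
    and ab: "a \<in> X" "b \<in> X" "(a,b) \<in> R"
  shows "(iso X Y a, iso X Y b) \<in> R"
proof -
  have fY: "finite Y" using fib_fin Y by auto
  have bY: "bij_betw (enum Y) Y {0..<card Y}" using enum_bij[OF fY] .
  have "(enum X a, enum X b) \<in> (\<lambda>(a,b). (enum X a, enum X b)) ` (R \<inter> X \<times> X)" using ab by force
  then have "(enum X a, enum X b) \<in> (\<lambda>(a,b). (enum Y a, enum Y b)) ` (R \<inter> Y \<times> Y)"
    using c unfolding code_def by simp
  then obtain a' b' where a'b': "(a',b') \<in> R" "a' \<in> Y" "b' \<in> Y" "enum Y a' = enum X a" "enum Y b' = enum X b"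
    by auto
  have ij: "inj_on (enum Y) Y" using bij_betw_imp_inj_on[OF bY] .
  have "inv_into Y (enum Y) (enum X a) = a'"
    using inv_into_f_eq[OF ij a'b'(2) a'b'(4)] .
  moreover have "inv_into Y (enum Y) (enum X b) = b'"
    using inv_into_f_eq[OF ij a'b'(3) a'b'(5)] .
  ultimately show ?thesis using a'b'(1) unfolding iso_def by simp
qed

lemma iso_inv:
  assumes X: "X \<in> Fibs" and Y: "Y \<in> Fibs" and c: "code X = code Y" and v: "v \<in> Y"
  shows "iso X Y (iso Y X v) = v"
proof -
  have fX: "finite X" and fY: "finite Y" using fib_fin X Y by auto
  have cc: "card X = card Y" using c unfolding code_def by simp
  have bX: "bij_betw (enum X) X {0..<card Y}" using enum_bij[OF fX] cc by simp
  have bY: "bij_betw (enum Y) Y {0..<card Y}" using enum_bij[OF fY] .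
  have ev: "enum Y v \<in> {0..<card Y}" using bij_betw_apply[OF bY v] .
  then have "enum Y v \<in> enum X ` X" using bX unfolding bij_betw_def by simp
  then have "enum X (inv_into X (enum X) (enum Y v)) = enum Y v" by (rule f_inv_into_f)
  then have "iso X Y (iso Y X v) = inv_into Y (enum Y) (enum Y v)" unfolding iso_def by simp
  also have "\<dots> = v" using bY v unfolding bij_betw_def by (simp add: inv_into_f_f)
  finally show ?thesis .
qed

lemma W3_tv:
  assumes q: "q > 0"
  shows "TVcrit W R (W3 q) q"
  unfolding TVcrit_def
proof (intro allI impI ballI)
  fix S d assume S: "S \<subseteq> W3 q \<and> finite S \<and> card S < q" and d: "d \<in> W"
  show "\<exists>\<sigma>. aut W R \<sigma> \<and> (\<forall>s\<in>S. \<sigma> s = s) \<and> \<sigma> d \<in> W3 q"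
  proof (cases "d \<in> W3 q")
    case True then show ?thesis using aut_id by (metis id_apply)
  next
    case False
    define X0 where "X0 = fib d"
    define c where "c = code X0"
    have X0F: "X0 \<in> Fibs" unfolding X0_def Fibs_def using d by blast
    have dX0: "d \<in> X0" unfolding X0_def using fib_self[OF d] .
    have nk: "X0 \<notin> keepC q c" using False X0F dX0 unfolding W3_def c_def by blast
    have X0in: "X0 \<in> {X\<in>Fibs. code X = c}" using X0F c_def by simp
    have cq: "card (keepC q c) = q" using cap_props(4)[where X="{X\<in>Fibs. code X = c}" and q=q] X0in nk
      unfolding keepC_def by blast
    have ksub: "keepC q c \<subseteq> {X\<in>Fibs. code X = c}" unfolding keepC_def by (rule cap_props(1))
    have "\<exists>X\<in>keepC q c. X \<inter> S = {}"
    proof (rule ccontr)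
      assume "\<not> ?thesis"
      then have ex: "\<forall>X\<in>keepC q c. \<exists>s. s \<in> S \<and> s \<in> X" by blast
      define f where "f X = (SOME s. s \<in> S \<and> s \<in> X)" for X
      have fx: "f X \<in> S \<and> f X \<in> X" if "X \<in> keepC q c" for X
        using someI_ex[OF ex[rule_format, OF that]] unfolding f_def .
      have "inj_on f (keepC q c)"
      proof (rule inj_onI)
        fix A B assume A: "A \<in> keepC q c" and B: "B \<in> keepC q c" and e: "f A = f B"
        have "A \<in> Fibs" "B \<in> Fibs" using A B ksub by auto
        moreover have "f A \<in> A" "f A \<in> B" using fx[OF A] fx[OF B] e by auto
        ultimately show "A = B" using fib_disj by blast
      qed
      moreover have "f ` keepC q c \<subseteq> S" using fx by blast
      ultimately have "card (keepC q c) \<le> card S" using card_inj_on_le S by blast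
      then show False using cq S by simp
    qed
    then obtain X where X: "X \<in> keepC q c" "X \<inter> S = {}" by blast
    have XF: "X \<in> Fibs" and cX: "code X = c" using X(1) ksub by auto
    have XX0: "X \<noteq> X0" using X(1) nk by blast
    have cX0X: "code X0 = code X" using cX c_def by simp
    have bi: "bij_betw (iso X0 X) X0 X" using iso_bij[OF X0F XF cX0X] .
    have disj: "X0 \<inter> X = {}" using fib_disj[OF X0F XF] XX0 by blast
    have sub: "X0 \<union> X \<subseteq> W" using fib_sub X0F XF by blast
    define \<sigma> where "\<sigma> = bswap (iso X0 X) X0 X"
    have inv: "\<forall>v\<in>W. \<sigma> v \<in> W \<and> \<sigma> (\<sigma> v) = v" unfolding \<sigma>_def by (rule bswap_inv[OF bi disj sub])
    have onX: "\<sigma> v = iso X X0 v" if "v \<in> X" for v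
    proof -
      have "iso X X0 v \<in> X0" using bij_betw_apply[OF iso_bij[OF XF X0F cX0X[symmetric]] that] .
      moreover have "iso X0 X (iso X X0 v) = v" using iso_inv[OF X0F XF cX0X that] .
      ultimately show ?thesis unfolding \<sigma>_def by (rule bswap_B_eq[OF bi disj])
    qed
    have pres: "(\<sigma> a, \<sigma> b) \<in> R" if "a \<in> W" "b \<in> W" "(a,b) \<in> R" for a b
    proof (cases "a \<in> X0")
      case True
      then have "b \<in> X0" using fib_edge[OF X0F True that(3)] by simp
      then show ?thesis using True iso_pres[OF X0F XF cX0X True _ that(3)] unfolding \<sigma>_def
        by (simp add: bswap_A)
    next
      case aX0: False
      show ?thesis
      proof (cases "a \<in> X")
        case True
        then have bX: "b \<in> X" using fib_edge[OF XF True that(3)] by simp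
        have "(iso X X0 a, iso X X0 b) \<in> R" using iso_pres[OF XF X0F cX0X[symmetric] True bX that(3)] .
        then show ?thesis using onX[OF True] onX[OF bX] by simp
      next
        case False
        have "b \<notin> X0"
        proof
          assume "b \<in> X0"
          have "\<kappa> a = \<kappa> b" using kedge[OF that(3)] .
          then have "a \<in> X0" using \<open>b \<in> X0\<close> that(1) unfolding X0_def fib_def by simp
          then show False using aX0 by simp
        qed
        moreover have "b \<notin> X"
        proof
          assume "b \<in> X"
          obtain w where "w \<in> W" "X = fib w" using XF unfolding Fibs_def by blast
          have "\<kappa> a = \<kappa> b" using kedge[OF that(3)] .
          then have "a \<in> X" using \<open>b \<in> X\<close> that(1) \<open>X = fib w\<close> unfolding fib_def by simp
          then show False using False by simp
        qed
        ultimately show ?thesis using aX0 False that(3) unfolding \<sigma>_def by (simp add: bswap_out)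
      qed
    qed
    have "aut W R \<sigma>" by (rule aut_inv[OF inv pres])
    moreover have "\<forall>s\<in>S. \<sigma> s = s"
    proof
      fix s assume sS: "s \<in> S"
      have "s \<notin> X0"
      proof
        assume sX0: "s \<in> X0"
        have "s \<in> W3 q" using sS S by blast
        then obtain Y where Y: "Y \<in> Fibs" "Y \<in> keepC q (code Y)" "s \<in> Y" unfolding W3_def by blast
        have "Y = X0" using fib_disj[OF Y(1) X0F Y(3) sX0] .
        then show False using Y(2) nk c_def by simp
      qed
      moreover have "s \<notin> X" using X(2) sS by blast
      ultimately show "\<sigma> s = s" unfolding \<sigma>_def by (simp add: bswap_out)
    qed
    moreover have "\<sigma> d \<in> W3 q"
    proof -
      have "\<sigma> d \<in> X" using bswap_A[OF dX0] bij_betw_apply[OF bi dX0] unfolding \<sigma>_def by simp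
      moreover have "X \<in> keepC q (code X)" using X(1) cX by simp
      ultimately show ?thesis unfolding W3_def using XF by blast
    qed
    ultimately show ?thesis by blast
  qed
qed

lemma W3_sub: "W3 q \<subseteq> W"
proof
  fix v assume "v \<in> W3 q"
  then obtain X where "X \<in> Fibs" "v \<in> X" unfolding W3_def by blast
  then show "v \<in> W" using fib_sub by blast
qed

lemma W3_sp: "\<forall>w\<in>W3 q. (\<exists>v. (w,v)\<in>R) \<longrightarrow> (\<exists>v\<in>W3 q. (w,v)\<in>R)"
proof (intro ballI impI)
  fix w assume w: "w \<in> W3 q" and "\<exists>v. (w,v)\<in>R"
  then obtain v where wv: "(w,v) \<in> R" by blast
  obtain X where X: "X \<in> Fibs" "X \<in> keepC q (code X)" "w \<in> X" using w unfolding W3_def by blast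
  have "v \<in> X" using fib_edge[OF X(1) X(3) wv] .
  then have "v \<in> W3 q" using X unfolding W3_def by blast
  then show "\<exists>v\<in>W3 q. (w,v)\<in>R" using wv by blast
qed

lemma W3_card: "finite (W3 q) \<and> card (W3 q) \<le> (N+1) * 2^(N*N) * (q * N)"
proof -
  have eq: "W3 q = (\<Union>c\<in>Codes. \<Union>X\<in>keepC q c. X)"
  proof
    show "W3 q \<subseteq> (\<Union>c\<in>Codes. \<Union>X\<in>keepC q c. X)"
    proof
      fix v assume "v \<in> W3 q"
      then obtain X where X: "X \<in> Fibs" "X \<in> keepC q (code X)" "v \<in> X" unfolding W3_def by blast
      have "code X \<in> Codes" using code_in[OF X(1)] .
      then show "v \<in> (\<Union>c\<in>Codes. \<Union>X\<in>keepC q c. X)" using X by blast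
    qed
    show "(\<Union>c\<in>Codes. \<Union>X\<in>keepC q c. X) \<subseteq> W3 q"
    proof
      fix v assume "v \<in> (\<Union>c\<in>Codes. \<Union>X\<in>keepC q c. X)"
      then obtain c X where cX: "X \<in> keepC q c" "v \<in> X" by blast
      have "X \<in> {X\<in>Fibs. code X = c}" using subsetD[OF cap_props(1) cX(1)[unfolded keepC_def]] .
      then show "v \<in> W3 q" using cX unfolding W3_def by auto
    qed
  qed
  have fCodes: "finite Codes" "card Codes = (N+1) * 2^(N*N)"
    unfolding Codes_def by (auto simp: card_cartesian_product card_Pow)
  have inner: "finite (\<Union>X\<in>keepC q c. X) \<and> card (\<Union>X\<in>keepC q c. X) \<le> q * N" for c
  proof -
    have fk: "finite (keepC q c)" "card (keepC q c) \<le> q" unfolding keepC_def by (rule cap_props)+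
    have ks: "keepC q c \<subseteq> Fibs" using cap_props(1)[where q=q and X="{X\<in>Fibs. code X = c}"] unfolding keepC_def by blast
    have "card (\<Union>X\<in>keepC q c. X) \<le> card (keepC q c) * N"
      by (rule card_UN_bound[OF fk(1)]) (use ks fib_fin in blast)
    also have "\<dots> \<le> q * N" using fk(2) by simp
    finally show ?thesis using fk(1) ks fib_fin by blast
  qed
  have "card (W3 q) \<le> card Codes * (q * N)" unfolding eq
    by (rule card_UN_bound[OF fCodes(1)]) (use inner in blast)
  moreover have "finite (W3 q)" unfolding eq using fCodes(1) inner by blast
  ultimately show ?thesis using fCodes(2) by simp
qed

end



lemma res_res: "Y \<subseteq> X \<Longrightarrow> res (res R X) Y = res R Y"
  unfolding res_def by blast

lemma reduce:
  fixes W :: "'w set" and R :: "('w \<times> 'w) set"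
  assumes RW: "R \<subseteq> W \<times> W" and E: "euclidean W R" and val: "mvalid W R \<phi>" and ne: "W \<noteq> {}"
    and kk4: "kk \<ge> 4" and q3: "q \<ge> 3"
    and nofl: "\<forall>m n::nat. m \<ge> 2 \<longrightarrow> n \<ge> 2 \<longrightarrow> m + n = Suc kk \<longrightarrow>
                 \<not> mvalid (flower_W m (int n)) (flower_R m (int n)) \<phi>"
    and N: "N = (2 * q * (q * (q + 1)^2 + 1)) * 2^kk"
  shows "\<exists>W'. W' \<subseteq> W \<and> W' \<noteq> {} \<and> finite W' \<and> card W' \<le> (N+1) * 2^(N*N) * (q * N)
    \<and> euclidean W' (res R W') \<and> mvalid W' (res R W') \<phi>
    \<and> (\<forall>A. sentence A \<and> qd A \<le> q \<longrightarrow> (fo_valid W' (res R W') A \<longleftrightarrow> fo_valid W R A))"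
proof -
  have q0: "q > 0" using q3 by simp
  interpret E0: efr W R by unfold_locales (rule RW, rule E)
  define W1 where "W1 = E0.W1 q"
  define R1 where "R1 = res R W1"
  have s1: "W1 \<subseteq> W" unfolding W1_def by (rule E0.W1_sub)
  have g1: "W1 \<noteq> {} \<and> R1 \<subseteq> W1 \<times> W1 \<and> euclidean W1 R1 \<and> (mvalid W R \<phi> \<longrightarrow> mvalid W1 R1 \<phi>)
     \<and> (\<forall>A. sentence A \<and> qd A \<le> q \<longrightarrow> (fo_valid W1 R1 A \<longleftrightarrow> fo_valid W R A))"
    unfolding R1_def W1_def
    by (rule step_good[OF RW E E0.W1_sub E0.W1_tv[OF q0] q0 ne E0.W1_spw])
  have capped1: "finite (efr.cls W1 R1 T) \<and> card (efr.cls W1 R1 T) \<le> q" for T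
  proof -
    interpret E1: efr W1 R1 by unfold_locales (use g1 in auto)
    have "E1.cls T \<subseteq> cap q (E0.cls T)"
    proof
      fix v assume "v \<in> E1.cls T"
      then have "v \<in> W1" "(v,v) \<notin> R1" "R1``{v} = T" by (simp_all add: E1.cls_def)
      then have "v \<in> {v\<in>E0.W1 q. (v,v) \<notin> res R (E0.W1 q) \<and> res R (E0.W1 q)``{v} = T}"
        unfolding R1_def W1_def by blast
      then show "v \<in> cap q (E0.cls T)" using E0.W1_capped by blast
    qed
    moreover have "finite (cap q (E0.cls T))" "card (cap q (E0.cls T)) \<le> q" by (rule cap_props)+
    ultimately show ?thesis using card_mono finite_subset le_trans by metis
  qed
  interpret C: efrc W1 R1 \<phi> kk q
  proof unfold_locales
    show "R1 \<subseteq> W1 \<times> W1" "euclidean W1 R1" "mvalid W1 R1 \<phi>" using g1 val by auto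
    show "kk \<ge> 4" by (rule kk4)
    show "\<forall>m n::nat. m \<ge> 2 \<longrightarrow> n \<ge> 2 \<longrightarrow> m + n = Suc kk \<longrightarrow>
                 \<not> mvalid (flower_W m (int n)) (flower_R m (int n)) \<phi>" by (rule nofl)
    show "q \<ge> 3" by (rule q3)
    show "\<And>T. finite (efr.cls W1 R1 T) \<and> card (efr.cls W1 R1 T) \<le> q" by (rule capped1)
  qed
  define W2 where "W2 = C.W2"
  define R2 where "R2 = res R1 W2"
  have s2: "W2 \<subseteq> W1" unfolding W2_def by (rule C.W2_sub)
  have g2: "W2 \<noteq> {} \<and> R2 \<subseteq> W2 \<times> W2 \<and> euclidean W2 R2 \<and> (mvalid W1 R1 \<phi> \<longrightarrow> mvalid W2 R2 \<phi>)
     \<and> (\<forall>A. sentence A \<and> qd A \<le> q \<longrightarrow> (fo_valid W2 R2 A \<longleftrightarrow> fo_valid W1 R1 A))"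
    unfolding R2_def W2_def
    by (rule step_good[OF C.RW C.E C.W2_sub C.W2_tv q0 _ C.W2_spw]) (use g1 in blast)
  interpret K: efk W2 R2 C.kap N
  proof unfold_locales
    show "R2 \<subseteq> W2 \<times> W2" using g2 by blast
    show "\<And>a b. (a,b) \<in> R2 \<Longrightarrow> C.kap a = C.kap b"
      unfolding R2_def res_def using C.kap_edge by blast
    show "\<And>w. w \<in> W2 \<Longrightarrow> finite {v\<in>W2. C.kap v = C.kap w} \<and> card {v\<in>W2. C.kap v = C.kap w} \<le> N"
      using C.fib2_bound N unfolding C.fib2_def W2_def by simp
  qed
  define W3 where "W3 = K.W3 q"
  define R3 where "R3 = res R2 W3"
  have s3: "W3 \<subseteq> W2" unfolding W3_def by (rule K.W3_sub)
  have E2: "euclidean W2 R2" using g2 by blast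
  have g3: "W3 \<noteq> {} \<and> R3 \<subseteq> W3 \<times> W3 \<and> euclidean W3 R3 \<and> (mvalid W2 R2 \<phi> \<longrightarrow> mvalid W3 R3 \<phi>)
     \<and> (\<forall>A. sentence A \<and> qd A \<le> q \<longrightarrow> (fo_valid W3 R3 A \<longleftrightarrow> fo_valid W2 R2 A))"
    unfolding R3_def W3_def
    by (rule step_good[OF K.RW E2 K.W3_sub K.W3_tv[OF q0] q0 _ K.W3_sp]) (use g2 in blast)
  have R3eq: "R3 = res R W3"
    unfolding R3_def R2_def R1_def using res_res s2 s3 by (metis order_trans)
  have c3: "finite W3 \<and> card W3 \<le> (N+1) * 2^(N*N) * (q * N)" unfolding W3_def by (rule K.W3_card)
  have "W3 \<subseteq> W" using s1 s2 s3 by blast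
  moreover have "mvalid W3 R3 \<phi>" using g1 g2 g3 val by blast
  moreover have "\<forall>A. sentence A \<and> qd A \<le> q \<longrightarrow> (fo_valid W3 R3 A \<longleftrightarrow> fo_valid W R A)"
    using g1 g2 g3 by blast
  ultimately show ?thesis using g3 c3 R3eq by auto
qed



lemma final_arith:
  fixes N q Q K :: nat
  assumes "N = Q * K"
  shows "(N+1) * 2^(N*N) * (q * N) \<le> 2 * q * (Q * K + 1)^2 * 2 ^ ((Q * K)^2) * Q * K"
proof -
  define X where "X = q * N * 2^(N*N)"
  have l: "(N+1) * 2^(N*N) * (q * N) = X * (N+1)" unfolding X_def by (simp add: algebra_simps)
  have r: "2 * q * (Q * K + 1)^2 * 2 ^ ((Q * K)^2) * Q * K = X * (2 * (N+1)^2)"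
    unfolding X_def assms by (simp add: algebra_simps power2_eq_square)
  have "N + 1 \<le> 2 * (N+1)^2" by (simp add: power2_eq_square)
  then have "X * (N+1) \<le> X * (2 * (N+1)^2)" by (rule mult_le_mono2)
  then show ?thesis using l r by simp
qed

theorem lemma53:
  fixes L :: "fm set" and \<phi> :: fm and k :: int and A :: fof
  assumes "euclidean_logic L"
    and "finite (S_L L - exceptional)"
    and "L = K5_plus \<phi>"
    and "k \<ge> 4" and "\<forall>(m,n)\<in>S_L L - exceptional. int m + n \<le> k"
    and "\<forall>k'. k' \<ge> 4 \<and> (\<forall>(m,n)\<in>S_L L - exceptional. int m + n \<le> k') \<longrightarrow> k \<le> k'"
    and "sentence A"
  shows "let q = max (qd A) 3; Q = 2 * q * (q * (q + 1)^2 + 1); K = 2 ^ nat k in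
    A \<in> Th (Fr L :: ('w set \<times> ('w \<times> 'w) set) set) \<longleftrightarrow>
    (\<forall>(W :: 'w set) R. is_frame W R \<and> finite W \<and> euclidean W R
        \<and> card W \<le> 2 * q * (Q * K + 1)^2 * 2 ^ ((Q * K)^2) * Q * K
        \<and> mvalid W R \<phi> \<longrightarrow> fo_valid W R A)"
proof -
  define q where "q = max (qd A) 3"
  define Q where "Q = 2 * q * (q * (q + 1)^2 + 1)"
  define kk where "kk = nat k"
  define K where "K = (2::nat) ^ kk"
  have L: "L = K5_plus \<phi>" by (rule assms(3))
  have kk4: "kk \<ge> 4" using assms(4) kk_def by simp
  have q3: "q \<ge> 3" and qdq: "qd A \<le> q" unfolding q_def by auto
  have nofl: "\<forall>m n::nat. m \<ge> 2 \<longrightarrow> n \<ge> 2 \<longrightarrow> m + n = Suc kk \<longrightarrow>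
                 \<not> mvalid (flower_W m (int n)) (flower_R m (int n)) \<phi>"
  proof (intro allI impI notI)
    fix m n :: nat assume m2: "m \<ge> 2" and n2: "n \<ge> 2" and mn: "m + n = Suc kk"
      and v: "mvalid (flower_W m (int n)) (flower_R m (int n)) \<phi>"
    have "mvalid_set (flower_W m (int n)) (flower_R m (int n)) L"
      using valid_K5plus[OF flower_euclid v] L by simp
    then have "(m, int n) \<in> S_L L" unfolding S_L_def using m2 by simp
    moreover have "(m, int n) \<notin> exceptional" unfolding exceptional_def using m2 n2 by auto
    ultimately have "int m + int n \<le> k" using assms(5) by blast
    moreover have "int m + int n = k + 1" using mn assms(4) kk_def by linarith
    ultimately show False by simp
  qed
  have main: "A \<in> Th (Fr L :: ('w set \<times> ('w \<times> 'w) set) set) \<longleftrightarrow>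
    (\<forall>(W :: 'w set) R. is_frame W R \<and> finite W \<and> euclidean W R
        \<and> card W \<le> 2 * q * (Q * K + 1)^2 * 2 ^ ((Q * K)^2) * Q * K
        \<and> mvalid W R \<phi> \<longrightarrow> fo_valid W R A)"
  proof
    assume "A \<in> Th (Fr L :: ('w set \<times> ('w \<times> 'w) set) set)"
    then have th: "\<forall>(W,R)\<in>(Fr L :: ('w set \<times> ('w \<times> 'w) set) set). fo_valid W R A"
      unfolding Th_def by blast
    show "\<forall>(W :: 'w set) R. is_frame W R \<and> finite W \<and> euclidean W R
        \<and> card W \<le> 2 * q * (Q * K + 1)^2 * 2 ^ ((Q * K)^2) * Q * K
        \<and> mvalid W R \<phi> \<longrightarrow> fo_valid W R A"
    proof (intro allI impI)
      fix W :: "'w set" and R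
      assume H: "is_frame W R \<and> finite W \<and> euclidean W R
        \<and> card W \<le> 2 * q * (Q * K + 1)^2 * 2 ^ ((Q * K)^2) * Q * K \<and> mvalid W R \<phi>"
      have "mvalid_set W R L" using valid_K5plus[of W R \<phi>] H L by blast
      then have "(W,R) \<in> (Fr L :: ('w set \<times> ('w \<times> 'w) set) set)" using H unfolding Fr_def by blast
      then show "fo_valid W R A" using th by blast
    qed
  next
    assume H2: "\<forall>(W :: 'w set) R. is_frame W R \<and> finite W \<and> euclidean W R
        \<and> card W \<le> 2 * q * (Q * K + 1)^2 * 2 ^ ((Q * K)^2) * Q * K
        \<and> mvalid W R \<phi> \<longrightarrow> fo_valid W R A"
    have "\<forall>(W,R)\<in>(Fr L :: ('w set \<times> ('w \<times> 'w) set) set). fo_valid W R A"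
    proof (intro ballI, clarify)
      fix W :: "'w set" and R
      assume "(W,R) \<in> (Fr L :: ('w set \<times> ('w \<times> 'w) set) set)"
      then have fr: "is_frame W R" and vs: "mvalid_set W R L" unfolding Fr_def by auto
      have RW: "R \<subseteq> W \<times> W" and ne: "W \<noteq> {}" using fr unfolding is_frame_def by auto
      have E: "euclidean W R" and val: "mvalid W R \<phi>" using Fr_char[OF RW] vs L by auto
      define N where "N = Q * K"
      have N': "N = (2 * q * (q * (q + 1)^2 + 1)) * 2^kk" unfolding N_def Q_def K_def by simp
      obtain W' where W': "W' \<subseteq> W" "W' \<noteq> {}" "finite W'" "card W' \<le> (N+1) * 2^(N*N) * (q * N)"
        "euclidean W' (res R W')" "mvalid W' (res R W') \<phi>"
        "\<forall>A. sentence A \<and> qd A \<le> q \<longrightarrow> (fo_valid W' (res R W') A \<longleftrightarrow> fo_valid W R A)"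
        using reduce[OF RW E val ne kk4 q3 nofl N'] by blast
      have "card W' \<le> 2 * q * (Q * K + 1)^2 * 2 ^ ((Q * K)^2) * Q * K"
        using W'(4) final_arith[OF N_def, of q] by linarith
      moreover have "is_frame W' (res R W')" unfolding is_frame_def res_def using W'(2) by blast
      ultimately have "fo_valid W' (res R W') A" using H2 W'(3,5,6) by blast
      then show "fo_valid W R A" using W'(7) assms(7) qdq by blast
    qed
    then show "A \<in> Th (Fr L :: ('w set \<times> ('w \<times> 'w) set) set)" unfolding Th_def using assms(7) by blast
  qed
  show ?thesis unfolding Let_def using main unfolding Q_def K_def kk_def q_def .
qed


end
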